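(* Consider the network model with social-oblivious mobility and interest-based routing IB$(\gamma)$ described in the context, with $\gamma=\frac{0.29}{m-1}$, and let $T^{so}_{IB(\gamma)}$ be the time at which the message is first delivered to $D$. Then $\mathbb{E}[T^{so}_{IB(\gamma)}]=\frac{1}{2\lambda}(1+o(1))$ as $n\to\infty$.
   Context: Network: fix an integer $m\ge 2$ independent of $n$. There are $n+2$ nodes: a source $S$, a destination $D$ and relays $R_1,\dots,R_n$. Each node $X$ has an interest profile, a unit vector in the closed positive orthant of the unit sphere of $\mathbb{R}^m$; $\cos\angle(X,Y)=\langle X,Y\rangle$. $S=(1,0,\dots,0)$, $D=(0,1,0,\dots,0)$. Relay profiles are i.i.d.: $\angle(S,R_i)$ is uniform on $[0,\pi/2]$, and given this angle $R_i$ is uniform among unit vectors of the positive orthant making that angle with $S$. Profiles are fixed in time. For each unordered pair $\{A,B\}$ the meeting instants form a Poisson process of rate $\lambda_{AB}$, independently over pairs, from time $0$. Social-oblivious mobility: $\lambda_{AB}=\lambda$ for all pairs, a fixed constant $\lambda>0$. IB$(\gamma)$ routing: $S$ holds two copies and always keeps one. If $S$ meets $D$ before handing over the second copy, the message is delivered then. Otherwise the second copy is given to the first relay $R$ met by $S$ with $\cos\angle(R,D)\ge\gamma$; if no such relay has been met by time $n$, it is given to the first relay met by $S$ after time $n$. Afterwards no further copies are created or transferred, and the message is delivered when the first of $S$ and that relay meets $D$. Expectations are over the profiles and the meeting processes. *)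

theory Defs
  imports "HOL-Probability.Probability"
begin

datatype node = Src | Dst | Rel nat

definition nodes :: "nat \<Rightarrow> node set" where
  "nodes n = {Src, Dst} \<union> Rel ` {..<n}"

definition node_pairs :: "nat \<Rightarrow> node set set" where
  "node_pairs n = {e. e \<subseteq> nodes n \<and> card e = 2}"

text \<open>Interest profiles live in R x R^(m-1) = R^m (first coordinate = direction of S),
  with m - 1 = CARD('k).  S = (1,0), D = (0, e_j1).\<close>
definition S_prof :: "real \<times> (real ^ 'k)" where
  "S_prof = (1, 0)"

definition D_prof :: "'k \<Rightarrow> real \<times> (real ^ 'k)" where
  "D_prof j1 = (0, axis j1 1)"

definition pos_ball :: "(real ^ 'k) set" where
  "pos_ball = {w. (\<forall>j. 0 \<le> w $ j) \<and> norm w \<le> 1}"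

text \<open>Uniform (normalised surface) measure on the positive orthant of the unit sphere of R^(m-1),
  as the normalised cone measure: image of the uniform measure on the positive orthant of the ball
  under radial projection.\<close>
definition unif_pos_sphere :: "(real ^ 'k) measure" where
  "unif_pos_sphere = distr (uniform_measure lborel pos_ball) borel (\<lambda>w. w /\<^sub>R norm w)"

text \<open>Relay profile law: angle theta with S uniform on [0, pi/2], and given theta the profile is
  uniform among unit vectors of the positive orthant at angle theta from S, i.e.
  (cos theta, sin theta * u) with u uniform on the positive orthant of the unit sphere of R^(m-1).\<close>
definition profile_distr :: "(real \<times> (real ^ 'k)) measure" where
  "profile_distr =
     distr (uniform_measure lborel {0..pi/2} \<Otimes>\<^sub>M unif_pos_sphere) borel
       (\<lambda>(\<theta>, u). (cos \<theta>, sin \<theta> *\<^sub>R u))"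

text \<open>Meeting instants of a Poisson process given by its inter-meeting times.\<close>
definition meet_times :: "(nat \<Rightarrow> real) \<Rightarrow> real set" where
  "meet_times X = range (\<lambda>k. \<Sum>j\<le>k. X j)"

definition deliv_time ::
  "nat \<Rightarrow> real \<Rightarrow> (nat \<Rightarrow> real \<times> (real ^ 'k)) \<Rightarrow> real \<times> (real ^ 'k)
     \<Rightarrow> (node set \<Rightarrow> real set) \<Rightarrow> real" where
  "deliv_time n \<gamma> P d MT =
     (let tSD = Inf (MT {Src, Dst});
          H1 = {(i, t). i < n \<and> \<gamma> \<le> P i \<bullet> d \<and> t \<in> MT {Src, Rel i} \<and> t \<le> real n};
          H2 = {(i, t). i < n \<and> t \<in> MT {Src, Rel i} \<and> real n < t};
          H = (if H1 \<noteq> {} then H1 else H2);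
          h = Inf (snd ` H);
          r = (SOME i. (i, h) \<in> H)
      in min tSD (Inf {t \<in> MT {Rel r, Dst}. h \<le> t}))"

definition rv_events :: "'w measure \<Rightarrow> 'a measure \<Rightarrow> ('w \<Rightarrow> 'a) \<Rightarrow> 'w set set" where
  "rv_events M N X = {X -` A \<inter> space M | A. A \<in> sets N}"

end

theory Submission
  imports Defs
begin



lemma mt_basic:
  assumes "\<And>k. 0 \<le> x k"
  shows "x 0 \<in> meet_times x" "\<And>t. t \<in> meet_times x \<Longrightarrow> x 0 \<le> t"
    "Inf (meet_times x) = x 0"
proof -
  show 1: "x 0 \<in> meet_times x" unfolding meet_times_def
    by (rule image_eqI[of _ _ 0]) auto
  show 2: "\<And>t. t \<in> meet_times x \<Longrightarrow> x 0 \<le> t"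
  proof -
    fix t assume "t \<in> meet_times x"
    then obtain k where "t = (\<Sum>j\<le>k. x j)" unfolding meet_times_def by auto
    moreover have "x 0 \<le> (\<Sum>j\<le>k. x j)"
      by (rule member_le_sum) (auto simp: assms)
    ultimately show "x 0 \<le> t" by simp
  qed
  show "Inf (meet_times x) = x 0"
    by (rule cInf_eq_minimum[OF 1 2])
qed

lemma inf_after:
  assumes "\<And>k. 0 \<le> x k" "h \<le> x 0"
  shows "Inf {t \<in> meet_times x. h \<le> t} = x 0"
  using mt_basic[OF assms(1)] assms(2)
  by (intro cInf_eq_minimum) auto

lemma deliv_le:
  assumes "\<And>k. 0 \<le> x {Src, Dst} k"
  shows "deliv_time n g P d (\<lambda>e. meet_times (x e)) \<le> x {Src, Dst} 0"
  unfolding deliv_time_def Let_def using mt_basic(3)[OF assms] by simp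

lemma deliv_eq:
  fixes P :: "nat \<Rightarrow> real \<times> (real ^ 'k)"
  assumes nnS: "\<And>k. 0 \<le> x {Src, Dst} k" and nnR: "\<And>j k. j < n \<Longrightarrow> 0 \<le> x {Src, Rel j} k"
    and nnD: "\<And>k. 0 \<le> x {Rel i, Dst} k"
    and Gi: "i < n" "g \<le> P i \<bullet> d" "x {Src, Rel i} 0 \<le> real n"
    and strict: "\<And>j. j < n \<Longrightarrow> j \<noteq> i \<Longrightarrow> g \<le> P j \<bullet> d \<Longrightarrow> x {Src, Rel j} 0 \<le> real n
                   \<Longrightarrow> x {Src, Rel i} 0 < x {Src, Rel j} 0"
    and Y: "x {Src, Rel i} 0 \<le> x {Rel i, Dst} 0"
  shows "deliv_time n g P d (\<lambda>e. meet_times (x e)) = min (x {Src, Dst} 0) (x {Rel i, Dst} 0)"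
proof -
  define H1 where "H1 = {(i, t). i < n \<and> g \<le> P i \<bullet> d \<and> t \<in> meet_times (x {Src, Rel i}) \<and> t \<le> real n}"
  have iH: "(i, x {Src, Rel i} 0) \<in> H1"
    unfolding H1_def using Gi mt_basic(1)[OF nnR] by auto
  have lower: "x {Src, Rel i} 0 \<le> t" if "(j, t) \<in> H1" for j t
  proof -
    from that have j: "j < n" "g \<le> P j \<bullet> d" "t \<in> meet_times (x {Src, Rel j})" "t \<le> real n"
      unfolding H1_def by auto
    have "x {Src, Rel j} 0 \<le> t" using mt_basic(2)[OF nnR[OF j(1)] j(3)] .
    show ?thesis
    proof (cases "j = i")
      case True then show ?thesis using \<open>x {Src, Rel j} 0 \<le> t\<close> by simp
    next
      case False
      have "x {Src, Rel i} 0 < x {Src, Rel j} 0"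
        using strict[OF j(1) False j(2)] \<open>x {Src, Rel j} 0 \<le> t\<close> j(4) by simp
      then show ?thesis using \<open>x {Src, Rel j} 0 \<le> t\<close> by simp
    qed
  qed
  have hval: "Inf (snd ` H1) = x {Src, Rel i} 0"
    using iH lower by (intro cInf_eq_minimum) force+
  have rH: "((SOME j. (j, x {Src, Rel i} 0) \<in> H1), x {Src, Rel i} 0) \<in> H1"
    using iH by (rule someI)
  define r where "r = (SOME j. (j, x {Src, Rel i} 0) \<in> H1)"
  have ri: "r = i"
  proof (rule ccontr)
    assume ne: "r \<noteq> i"
    from rH have j: "r < n" "g \<le> P r \<bullet> d" "x {Src, Rel i} 0 \<in> meet_times (x {Src, Rel r})"
        "x {Src, Rel i} 0 \<le> real n"
      unfolding H1_def r_def by auto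
    have le: "x {Src, Rel r} 0 \<le> x {Src, Rel i} 0" using mt_basic(2)[OF nnR[OF j(1)] j(3)] .
    have "x {Src, Rel i} 0 < x {Src, Rel r} 0"
      using strict[OF j(1) ne j(2)] le j(4) by simp
    with le show False by simp
  qed
  have ne: "H1 \<noteq> {}" using iH by auto
  show ?thesis
    unfolding deliv_time_def Let_def
    apply (simp only: H1_def[symmetric] if_P[OF ne] hval r_def[symmetric] ri)
    using mt_basic(3)[of "x {Src, Dst}", OF nnS] inf_after[of "x {Rel i, Dst}", OF nnD Y] by simp
qed



definition Zf :: "(nat \<Rightarrow> 'w \<Rightarrow> real \<times> (real ^ 'k)) \<Rightarrow> (node set \<Rightarrow> nat \<Rightarrow> 'w \<Rightarrow> real)
    \<Rightarrow> nat + node set \<times> nat \<Rightarrow> 'w \<Rightarrow> real \<times> (real ^ 'k)" where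
  "Zf P X j = (case j of Inl i \<Rightarrow> P i | Inr (e, k) \<Rightarrow> (\<lambda>\<omega>. (X e k \<omega>, 0)))"

lemma (in prob_space) master_indep:
  fixes P :: "nat \<Rightarrow> 'a \<Rightarrow> real \<times> (real ^ 'k)" and X :: "node set \<Rightarrow> nat \<Rightarrow> 'a \<Rightarrow> real"
  assumes P: "\<And>i. i \<in> I1 \<Longrightarrow> P i \<in> borel_measurable M"
    and Xm: "\<And>e k. e \<in> I2 \<Longrightarrow> X e k \<in> borel_measurable M"
    and ind: "indep_sets (case_sum (\<lambda>i. rv_events M borel (P i)) (\<lambda>(e, k). rv_events M borel (X e k)))
                  (Inl ` I1 \<union> Inr ` (I2 \<times> (UNIV :: nat set)))"
  shows "indep_vars (\<lambda>_. borel) (Zf P X) (Inl ` I1 \<union> Inr ` (I2 \<times> (UNIV :: nat set)))"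
  unfolding indep_vars_def2
proof safe
  fix i assume "i \<in> I1" then show "random_variable borel (Zf P X (Inl i))"
    using P by (simp add: Zf_def)
next
  fix e k assume "e \<in> I2" then show "random_variable borel (Zf P X (Inr (e, k)))"
    using Xm by (simp add: Zf_def)
next
  show "indep_sets (\<lambda>i. {Zf P X i -` A \<inter> space M |A. A \<in> sets borel}) (Inl ` I1 \<union> Inr ` (I2 \<times> (UNIV :: nat set)))"
  proof (rule indep_sets_mono_sets[OF ind])
    fix j assume j: "j \<in> Inl ` I1 \<union> Inr ` (I2 \<times> (UNIV :: nat set))"
    show "{Zf P X j -` A \<inter> space M |A. A \<in> sets borel} \<subseteq>
      case_sum (\<lambda>i. rv_events M borel (P i)) (\<lambda>(e, k). rv_events M borel (X e k)) j"
    proof (cases j)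
      case (Inl i) then show ?thesis by (auto simp: Zf_def rv_events_def)
    next
      case (Inr ek)
      then obtain e k where ek: "j = Inr (e, k)" by (cases ek) auto
      show ?thesis
      proof safe
        fix x A assume A: "A \<in> sets (borel :: (real \<times> (real ^ 'k)) measure)"
        have m: "(\<lambda>x::real. (x, 0 :: real ^ 'k)) \<in> borel_measurable borel" by simp
        have "(\<lambda>x::real. (x, 0 :: real ^ 'k)) -` A \<inter> space borel \<in> sets borel"
          using measurable_sets[OF m A] .
        then show "Zf P X j -` A \<inter> space M
          \<in> case_sum (\<lambda>i. rv_events M borel (P i)) (\<lambda>(e, k). rv_events M borel (X e k)) j"
          unfolding ek rv_events_def Zf_def
          by (auto intro!: exI[of _ "(\<lambda>x::real. (x, 0 :: real ^ 'k)) -` A"])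
      qed
    qed
  qed
qed



lemma (in prob_space) indep_restrict_nn:
  fixes Z :: "'i \<Rightarrow> 'a \<Rightarrow> 'b::topological_space" and f :: "('i \<Rightarrow> 'b) \<Rightarrow> real" and g :: "('i \<Rightarrow> 'b) \<Rightarrow> real"
  assumes ind: "indep_vars (\<lambda>_. borel) Z I" and AB: "A \<subseteq> I" "B \<subseteq> I" "A \<inter> B = {}"
    and f: "f \<in> borel_measurable (PiM A (\<lambda>_. borel))" and g: "g \<in> borel_measurable (PiM B (\<lambda>_. borel))"
    and fn: "\<And>x. 0 \<le> f x" and gn: "\<And>x. 0 \<le> g x"
  shows "(\<integral>\<^sup>+\<omega>. ennreal (f (restrict (\<lambda>i. Z i \<omega>) A)) * ennreal (g (restrict (\<lambda>i. Z i \<omega>) B)) \<partial>M)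
       = (\<integral>\<^sup>+\<omega>. ennreal (f (restrict (\<lambda>i. Z i \<omega>) A)) \<partial>M) * (\<integral>\<^sup>+\<omega>. ennreal (g (restrict (\<lambda>i. Z i \<omega>) B)) \<partial>M)"
proof -
  let ?F = "\<lambda>\<omega>. ennreal (f (restrict (\<lambda>i. Z i \<omega>) A))" and ?G = "\<lambda>\<omega>. ennreal (g (restrict (\<lambda>i. Z i \<omega>) B))"
  have f': "(\<lambda>x. ennreal (f x)) \<in> borel_measurable (PiM A (\<lambda>_. borel))" using f by simp
  have g': "(\<lambda>x. ennreal (g x)) \<in> borel_measurable (PiM B (\<lambda>_. borel))" using g by simp
  have iv: "indep_var borel ((\<lambda>x. ennreal (f x)) \<circ> (\<lambda>\<omega>. restrict (\<lambda>i. Z i \<omega>) A)) borel ((\<lambda>x. ennreal (g x)) \<circ> (\<lambda>\<omega>. restrict (\<lambda>i. Z i \<omega>) B))"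
    by (rule indep_var_compose[OF indep_var_restrict[OF ind AB(3,1,2)] f' g'])
  have iv2: "indep_vars (\<lambda>_. borel) (case_bool ?F ?G) UNIV"
    using iv unfolding indep_var_def
    by (rule indep_vars_cong[THEN iffD1, rotated 3]) (auto split: bool.split simp: o_def)
  have "(\<integral>\<^sup>+\<omega>. (\<Prod>b\<in>UNIV. case_bool ?F ?G b \<omega>) \<partial>M) = (\<Prod>b\<in>UNIV. \<integral>\<^sup>+\<omega>. case_bool ?F ?G b \<omega> \<partial>M)"
    by (rule indep_vars_nn_integral[OF _ iv2]) (auto split: bool.split simp: fn gn)
  then show ?thesis
    by (simp add: UNIV_bool mult.commute)
qed



lemma ball_props:
  fixes j1 :: "'k::finite" and w :: "real ^ 'k"
  defines "\<delta> \<equiv> 1 / (100 * real CARD('k))"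
  defines "c \<equiv> (\<chi> j. if j = j1 then 9/10 else \<delta>) :: real ^ 'k"
  assumes w: "w \<in> ball c \<delta>"
  shows "\<forall>j. 0 \<le> w $ j" "norm w \<le> 1" "58 / 100 / real CARD('k) \<le> (w /\<^sub>R norm w) $ j1"
proof -
  have K: "1 \<le> real CARD('k)" by simp
  have dpos: "0 < \<delta>" unfolding \<delta>_def by simp
  have d1: "\<delta> \<le> 1/100" unfolding \<delta>_def using K by (simp add: field_simps)
  have dist: "norm (w - c) < \<delta>" using w by (simp add: dist_norm norm_minus_commute)
  have comp: "\<bar>w $ j - c $ j\<bar> < \<delta>" for j
    using component_le_norm_cart[of "w - c" j] dist by simp
  show "\<forall>j. 0 \<le> w $ j"
  proof
    fix j show "0 \<le> w $ j" using comp[of j] d1 by (auto simp: c_def split: if_splits)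
  qed
  have "norm c \<le> (\<Sum>j\<in>UNIV. \<bar>c $ j\<bar>)" by (rule norm_le_l1_cart)
  also have "\<dots> \<le> (\<Sum>j\<in>UNIV. (if j = j1 then 9/10 else 0) + \<delta>)"
    by (rule sum_mono) (use dpos in \<open>auto simp: c_def\<close>)
  also have "\<dots> = 9/10 + real CARD('k) * \<delta>"
    by (simp add: sum.distrib)
  also have "\<dots> = 91/100" unfolding \<delta>_def by simp
  finally have nc: "norm c \<le> 91/100" .
  have "norm w \<le> norm c + norm (w - c)" using norm_triangle_ineq[of c "w - c"] by simp
  then have nw: "norm w \<le> 92/100" using nc dist d1 by simp
  then show "norm w \<le> 1" by simp
  have wj: "89/100 \<le> w $ j1" using comp[of j1] d1 by (simp add: c_def)
  have npos: "0 < norm w" using wj component_le_norm_cart[of w j1] by linarith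
  have "58 / 100 / real CARD('k) \<le> 58/100" using K by (simp add: field_simps)
  also have "58/100 \<le> w $ j1 / norm w"
    using wj nw npos by (simp add: field_simps)
  also have "w $ j1 / norm w = (w /\<^sub>R norm w) $ j1" by (simp add: divide_inverse_commute)
  finally show "58 / 100 / real CARD('k) \<le> (w /\<^sub>R norm w) $ j1" .
qed



lemma pos_ball_sets: "(pos_ball :: (real ^ 'k::finite) set) \<in> sets borel"
proof -
  have "pos_ball = (\<Inter>j. {w::real^'k. 0 \<le> w $ j}) \<inter> cball 0 1"
    unfolding pos_ball_def by auto
  also have "\<dots> \<in> sets borel"
    by (intro borel_closed closed_Int closed_INT) (auto intro: closed_halfspace_component_ge_cart)
  finally show ?thesis .
qed

lemma pos_ball_meas: "emeasure lborel (pos_ball :: (real ^ 'k::finite) set) < \<infinity>"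
proof -
  have "pos_ball \<subseteq> cball (0::real^'k) 1" unfolding pos_ball_def by auto
  then have "emeasure lborel (pos_ball :: (real ^ 'k::finite) set) \<le> emeasure lborel (cball (0::real^'k) 1)"
    by (intro emeasure_mono) auto
  then show ?thesis using emeasure_lborel_cball_finite[of "0::real^'k" 1] by simp
qed

lemma ball_in_target:
  fixes j1 :: "'k::finite"
  defines "\<delta> \<equiv> 1 / (100 * real CARD('k))"
  defines "c \<equiv> (\<chi> j. if j = j1 then 9/10 else \<delta>) :: real ^ 'k"
  shows "ball c \<delta> \<subseteq> pos_ball \<inter> ((\<lambda>w. w /\<^sub>R norm w) -` {u. 58 / 100 / real CARD('k) \<le> u $ j1})"
  using ball_props[of _ j1] unfolding \<delta>_def c_def pos_ball_def by auto

lemma sphere_pos: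
  fixes j1 :: "'k::finite"
  shows "0 < emeasure (unif_pos_sphere :: (real ^ 'k) measure) {u. 58 / 100 / real CARD('k) \<le> u $ j1}"
    and "prob_space (unif_pos_sphere :: (real ^ 'k) measure)"
proof -
  define \<delta> where "\<delta> = 1 / (100 * real CARD('k))"
  define c :: "real ^ 'k" where "c = (\<chi> j. if j = j1 then 9/10 else \<delta>)"
  define Q where "Q = {u::real^'k. 58 / 100 / real CARD('k) \<le> u $ j1}"
  have dpos: "0 < \<delta>" unfolding \<delta>_def by simp
  have Qs: "Q \<in> sets borel" unfolding Q_def by measurable
  have nm: "(\<lambda>w::real^'k. w /\<^sub>R norm w) \<in> borel_measurable borel" by measurable
  have pre: "(\<lambda>w::real^'k. w /\<^sub>R norm w) -` Q \<in> sets borel"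
    using measurable_sets[OF nm Qs] by simp
  have ballpos: "0 < emeasure lborel (ball c \<delta>)"
    using dpos by (simp add: emeasure_ball unit_ball_vol_pos)
  have sub: "ball c \<delta> \<subseteq> pos_ball \<inter> ((\<lambda>w. w /\<^sub>R norm w) -` Q)"
    using ball_in_target[of j1] unfolding Q_def c_def \<delta>_def by simp
  have num: "0 < emeasure lborel (pos_ball \<inter> ((\<lambda>w::real^'k. w /\<^sub>R norm w) -` Q))"
  proof -
    have "emeasure lborel (ball c \<delta>) \<le> emeasure lborel (pos_ball \<inter> ((\<lambda>w::real^'k. w /\<^sub>R norm w) -` Q))"
      by (rule emeasure_mono[OF sub]) (simp add: pos_ball_sets pre sets.Int)
    then show ?thesis using ballpos by (rule order_less_le_trans[rotated])
  qed
  have pbpos: "emeasure lborel (pos_ball::(real^'k) set) \<noteq> 0"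
  proof -
    have "emeasure lborel (pos_ball \<inter> ((\<lambda>w::real^'k. w /\<^sub>R norm w) -` Q)) \<le> emeasure lborel (pos_ball::(real^'k) set)"
      by (intro emeasure_mono) (auto simp: pos_ball_sets)
    then show ?thesis using num by auto
  qed
  show ps: "prob_space (unif_pos_sphere :: (real ^ 'k) measure)"
    unfolding unif_pos_sphere_def
    by (intro prob_space.prob_space_distr prob_space_uniform_measure pbpos)
       (use pos_ball_meas[THEN less_imp_neq] in auto)
  have "emeasure (unif_pos_sphere :: (real ^ 'k) measure) Q
      = emeasure (uniform_measure lborel pos_ball) ((\<lambda>w::real^'k. w /\<^sub>R norm w) -` Q \<inter> space (uniform_measure lborel pos_ball))"
    unfolding unif_pos_sphere_def by (rule emeasure_distr) (use nm Qs in auto)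
  also have "\<dots> = emeasure lborel (pos_ball \<inter> ((\<lambda>w::real^'k. w /\<^sub>R norm w) -` Q)) / emeasure lborel (pos_ball::(real^'k) set)"
    by (simp add: emeasure_uniform_measure pos_ball_sets pre)
  also have "0 < \<dots>"
    using num pos_ball_meas by (simp add: ennreal_zero_less_divide)
  finally show "0 < emeasure (unif_pos_sphere :: (real ^ 'k) measure) {u. 58 / 100 / real CARD('k) \<le> u $ j1}"
    unfolding Q_def .
qed



lemma unif_ang: "prob_space (uniform_measure lborel {0..pi/2})"
  "0 < emeasure (uniform_measure lborel {0..pi/2}) {pi/6..pi/2}"
proof -
  have e: "emeasure lborel {0..pi/2} = ennreal (pi/2)" by simp
  show "prob_space (uniform_measure lborel {0..pi/2})"
    by (rule prob_space_uniform_measure) (simp_all add: e)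
  have "emeasure (uniform_measure lborel {0..pi/2}) {pi/6..pi/2} = emeasure lborel ({0..pi/2} \<inter> {pi/6..pi/2}) / emeasure lborel {0..pi/2}"
    by (rule emeasure_uniform_measure) auto
  also have "{0..pi/2} \<inter> {pi/6..pi/2} = {pi/6..pi/2::real}" by auto
  also have "0 < emeasure lborel {pi/6..pi/2::real} / emeasure lborel {0..pi/2}"
    by (simp add: ennreal_zero_less_divide)
  finally show "0 < emeasure (uniform_measure lborel {0..pi/2}) {pi/6..pi/2}" .
qed

lemma prof_pos:
  fixes j1 :: "'k::finite"
  shows "0 < emeasure (profile_distr :: (real \<times> (real ^ 'k)) measure) {x. (29/100)/real CARD('k) \<le> x \<bullet> D_prof j1}"
    and "prob_space (profile_distr :: (real \<times> (real ^ 'k)) measure)"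
proof -
  let ?U = "uniform_measure lborel {0..pi/2}"
  let ?S = "unif_pos_sphere :: (real ^ 'k) measure"
  let ?phi = "(\<lambda>(\<theta>, u). (cos \<theta>, sin \<theta> *\<^sub>R u)) :: real \<times> (real ^ 'k) \<Rightarrow> real \<times> (real ^ 'k)"
  define G where "G = {x::real \<times> (real ^ 'k). (29/100)/real CARD('k) \<le> x \<bullet> D_prof j1}"
  define Q where "Q = {u::real^'k. 58 / 100 / real CARD('k) \<le> u $ j1}"
  have Sps: "prob_space ?S" by (rule sphere_pos(2))
  have Ups: "prob_space ?U" by (rule unif_ang(1))
  have sU: "sets ?U = sets borel" by simp
  have sS: "sets ?S = sets borel" by (simp add: unif_pos_sphere_def)
  have phim: "?phi \<in> measurable (?U \<Otimes>\<^sub>M ?S) borel"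
  proof -
    have "?phi \<in> measurable (borel \<Otimes>\<^sub>M borel) borel" by measurable
    moreover have "measurable (?U \<Otimes>\<^sub>M ?S) (borel :: (real \<times> (real ^ 'k)) measure) = measurable (borel \<Otimes>\<^sub>M borel) borel"
      by (rule measurable_cong_sets) (auto intro!: sets_pair_measure_cong simp: sS)
    ultimately show ?thesis by simp
  qed
  have Gs: "G \<in> sets borel" unfolding G_def by measurable
  have Qs: "Q \<in> sets ?S" unfolding Q_def sS by measurable
  have spc: "space (?U \<Otimes>\<^sub>M ?S) = UNIV"
    by (simp add: space_pair_measure unif_pos_sphere_def)
  have sub: "{pi/6..pi/2} \<times> Q \<subseteq> ?phi -` G \<inter> space (?U \<Otimes>\<^sub>M ?S)"
  proof safe
    fix \<theta> u assume th: "\<theta> \<in> {pi/6..pi/2}" and u: "u \<in> Q"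
    have s: "1/2 \<le> sin \<theta>"
      using sin_monotone_2pi_le[of "pi/6" \<theta>] th by (simp add: sin_30)
    have uq: "58 / 100 / real CARD('k) \<le> u $ j1" using u by (simp add: Q_def)
    have "(1/2) * (58 / 100 / real CARD('k)) \<le> sin \<theta> * u $ j1"
      by (rule mult_mono[OF s uq]) (use s in \<open>auto intro: order_trans[OF _ uq]\<close>)
    then show "(\<theta>, u) \<in> ?phi -` G" by (simp add: G_def D_prof_def inner_axis)
  qed (simp add: spc)
  have "0 < emeasure ?U {pi/6..pi/2} * emeasure ?S Q"
    using unif_ang(2) sphere_pos(1)[of j1] unfolding Q_def by (simp add: ennreal_zero_less_mult_iff)
  also have "\<dots> = emeasure (?U \<Otimes>\<^sub>M ?S) ({pi/6..pi/2} \<times> Q)"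
    by (rule sigma_finite_measure.emeasure_pair_measure_Times[symmetric])
       (auto intro: prob_space_imp_sigma_finite Sps Qs)
  also have "\<dots> \<le> emeasure (?U \<Otimes>\<^sub>M ?S) (?phi -` G \<inter> space (?U \<Otimes>\<^sub>M ?S))"
    by (rule emeasure_mono[OF sub]) (rule measurable_sets[OF phim Gs])
  also have "\<dots> = emeasure profile_distr G"
    unfolding profile_distr_def by (rule emeasure_distr[symmetric, OF phim Gs])
  finally show "0 < emeasure (profile_distr :: (real \<times> (real ^ 'k)) measure) {x. (29/100)/real CARD('k) \<le> x \<bullet> D_prof j1}"
    unfolding G_def .
  show "prob_space (profile_distr :: (real \<times> (real ^ 'k)) measure)"
    unfolding profile_distr_def
    by (intro prob_space.prob_space_distr phim prob_space_pair Ups Sps)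
qed



definition cmp :: "'i \<Rightarrow> ('i \<Rightarrow> 'b) \<Rightarrow> 'b" where "cmp i x = x i"

lemma meas_comp_any0:
  "(\<lambda>x. x i) \<in> measurable (PiM A (\<lambda>_. borel)) (borel :: 'b::topological_space measure)"
proof (cases "i \<in> A")
  case True then show ?thesis by (rule measurable_component_singleton)
next
  case False
  have "(\<lambda>x. undefined) \<in> measurable (PiM A (\<lambda>_. borel)) (borel :: 'b measure)" by simp
  then show ?thesis
    by (rule measurable_cong[THEN iffD1, rotated]) (auto simp: space_PiM PiE_def extensional_def False)
qed

lemma meas_cmp[measurable]:
  "cmp i \<in> measurable (PiM A (\<lambda>_. borel)) (borel :: 'b::topological_space measure)"
  using meas_comp_any0[of i A] unfolding cmp_def[abs_def] by simp

definition fc :: "'i \<Rightarrow> ('i \<Rightarrow> real \<times> 'b) \<Rightarrow> real" where "fc i x = fst (x i)"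

lemma meas_fc[measurable]:
  "fc i \<in> borel_measurable (PiM A (\<lambda>_. borel :: (real \<times> 'b::euclidean_space) measure))"
proof -
  have f: "(fst :: real \<times> 'b \<Rightarrow> real) \<in> borel_measurable borel"
    by (intro borel_measurable_continuous_onI continuous_intros)
  show ?thesis using measurable_compose[OF meas_cmp[of i A] f] unfolding fc_def[abs_def] cmp_def by simp
qed

definition iA :: "nat \<Rightarrow> nat + node set \<times> nat" where "iA j = Inr ({Src, Rel j}, 0)"

definition Bp :: "nat \<Rightarrow> real \<Rightarrow> real \<times> (real ^ 'k) \<Rightarrow> nat \<Rightarrow> (nat + node set \<times> nat \<Rightarrow> real \<times> (real ^ 'k)) \<Rightarrow> bool" where
  "Bp n g d i x \<longleftrightarrow> g \<le> cmp (Inl i) x \<bullet> d \<and> fc (iA i) x \<le> real n \<and>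
     (\<forall>j\<in>{..<n}. j \<noteq> i \<longrightarrow> g \<le> cmp (Inl j) x \<bullet> d \<longrightarrow> fc (iA j) x \<le> real n \<longrightarrow> fc (iA i) x < fc (iA j) x)"




definition iE :: "nat + node set \<times> nat" where "iE = Inr ({Src, Dst}, 0)"
definition iY :: "nat \<Rightarrow> nat + node set \<times> nat" where "iY j = Inr ({Rel j, Dst}, 0)"
definition SA :: "nat \<Rightarrow> (nat + node set \<times> nat) set" where "SA n = Inl ` {..<n} \<union> iA ` {..<n}"

lemma np_SD: "{Src, Dst} \<in> node_pairs n"
  by (simp add: node_pairs_def nodes_def)
lemma np_SR: "j < n \<Longrightarrow> {Src, Rel j} \<in> node_pairs n"
  by (simp add: node_pairs_def nodes_def)
lemma np_RD: "j < n \<Longrightarrow> {Rel j, Dst} \<in> node_pairs n"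
  by (simp add: node_pairs_def nodes_def)

abbreviation II :: "nat \<Rightarrow> (nat + node set \<times> nat) set" where
  "II n \<equiv> Inl ` {..<n} \<union> Inr ` (node_pairs n \<times> (UNIV::nat set))"

lemma idx_facts:
  "SA n \<subseteq> II n"
  "i < n \<Longrightarrow> {iE, iY i} \<subseteq> II n"
  "{iE} \<subseteq> II n"
  "i < n \<Longrightarrow> {iY i} \<subseteq> II n"
  "i < n \<Longrightarrow> {iA i} \<subseteq> II n"
  "SA n \<inter> {iE, iY i} = {}"
  "SA n \<inter> {iE} = {}"
  "{iY i} \<inter> {iE} = {}"
  "i \<noteq> j \<Longrightarrow> {iA i} \<inter> {iA j} = {}"
  "{Inl i, iA i} \<inter> {Inl j, iA j} = {} \<or> i = j"
  by (auto simp: SA_def iA_def iE_def iY_def np_SD np_SR np_RD doubleton_eq_iff)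


definition Bf :: "nat \<Rightarrow> real \<Rightarrow> real \<times> (real ^ 'k) \<Rightarrow> nat \<Rightarrow> (nat + node set \<times> nat \<Rightarrow> real \<times> (real ^ 'k)) \<Rightarrow> real"
  where "Bf n g d i x = (if Bp n g d i x then 1 else 0)"
definition Bfe :: "nat \<Rightarrow> real \<Rightarrow> real \<times> (real ^ 'k) \<Rightarrow> real \<Rightarrow> nat \<Rightarrow> (nat + node set \<times> nat \<Rightarrow> real \<times> (real ^ 'k)) \<Rightarrow> real"
  where "Bfe n g d eps i x = (if Bp n g d i x \<and> fc (iA i) x \<le> eps then 1 else 0)"
definition nF :: "nat \<Rightarrow> real \<Rightarrow> real \<times> (real ^ 'k) \<Rightarrow> real \<Rightarrow> (nat + node set \<times> nat \<Rightarrow> real \<times> (real ^ 'k)) \<Rightarrow> real"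
  where "nF n g d eps x = (if (\<forall>j\<in>{..<n}. \<not> (g \<le> cmp (Inl j) x \<bullet> d \<and> fc (iA j) x \<le> eps)) then 1 else 0)"
definition Ev :: "(nat + node set \<times> nat \<Rightarrow> real \<times> (real ^ 'k)) \<Rightarrow> real"
  where "Ev x = max 0 (fc iE x)"
definition Yv :: "nat \<Rightarrow> (nat + node set \<times> nat \<Rightarrow> real \<times> (real ^ 'k)) \<Rightarrow> real"
  where "Yv i x = max 0 (fc (iY i) x)"
definition u1 :: "real \<Rightarrow> nat \<Rightarrow> (nat + node set \<times> nat \<Rightarrow> real \<times> (real ^ 'k)) \<Rightarrow> real"
  where "u1 eps i x = min (Ev x) (Yv i x) + (if Yv i x < eps then Ev x else 0)"
definition l1 :: "real \<Rightarrow> nat \<Rightarrow> (nat + node set \<times> nat \<Rightarrow> real \<times> (real ^ 'k)) \<Rightarrow> real"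
  where "l1 eps i x = (if eps \<le> Yv i x then min (Ev x) (Yv i x) else 0)"

lemma meas_Ev[measurable]: "Ev \<in> borel_measurable (PiM A (\<lambda>_. borel))"
  unfolding Ev_def by measurable
lemma meas_Yv[measurable]: "Yv i \<in> borel_measurable (PiM A (\<lambda>_. borel))"
  unfolding Yv_def by measurable
lemma meas_Bp[measurable]: "Measurable.pred (PiM A (\<lambda>_. borel)) (Bp n g d i)"
  unfolding Bp_def by measurable
lemma meas_Bf[measurable]: "Bf n g d i \<in> borel_measurable (PiM A (\<lambda>_. borel))"
  unfolding Bf_def by measurable
lemma meas_Bfe[measurable]: "Bfe n g d eps i \<in> borel_measurable (PiM A (\<lambda>_. borel))"
  unfolding Bfe_def by measurable
lemma meas_nF[measurable]: "nF n g d eps \<in> borel_measurable (PiM A (\<lambda>_. borel))"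
  unfolding nF_def by measurable
lemma meas_u1[measurable]: "u1 eps i \<in> borel_measurable (PiM A (\<lambda>_. borel))"
  unfolding u1_def by measurable
lemma meas_l1[measurable]: "l1 eps i \<in> borel_measurable (PiM A (\<lambda>_. borel))"
  unfolding l1_def by measurable

lemma funs_nonneg:
  "0 \<le> Bf n g d i x" "0 \<le> Bfe n g d eps i x" "0 \<le> nF n g d eps x" "0 \<le> Ev x" "0 \<le> Yv i x"
  "0 \<le> u1 eps i x" "0 \<le> l1 eps i x"
  unfolding Bf_def Bfe_def nF_def Ev_def Yv_def u1_def l1_def by auto


lemma (in prob_space) indep_restrict_var:
  assumes ind: "indep_vars M' Z I" and AB: "A \<subseteq> I" "B \<subseteq> I" "A \<inter> B = {}"
    and f: "f \<in> measurable (PiM A M') N1" and g: "g \<in> measurable (PiM B M') N2"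
  shows "indep_var N1 (\<lambda>\<omega>. f (restrict (\<lambda>i. Z i \<omega>) A)) N2 (\<lambda>\<omega>. g (restrict (\<lambda>i. Z i \<omega>) B))"
  using indep_var_compose[OF indep_var_restrict[OF ind AB(3,1,2)] f g] by (simp add: o_def)

lemma finite_node_pairs: "finite (node_pairs n)"
proof -
  have "node_pairs n \<subseteq> Pow (nodes n)" unfolding node_pairs_def by auto
  moreover have "finite (nodes n)" unfolding nodes_def by simp
  ultimately show ?thesis by (rule finite_subset[OF _ finite_Pow_iff[THEN iffD2]])
qed

lemma (in prob_space) exp_nonneg_AE:
  assumes "distributed M lborel X (exponential_density l)"
  shows "AE \<omega> in M. 0 \<le> X \<omega>"
  by (subst distributed_AE2[OF assms]) (auto simp: exponential_density_def)

lemma (in prob_space) exp_nn_integral: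
  assumes l: "0 < l" and D: "distributed M lborel X (exponential_density l)"
  shows "(\<integral>\<^sup>+ \<omega>. ennreal (X \<omega>) \<partial>M) = ennreal (1 / l)"
  using nn_integral_erlang_ith_moment[of l 0 1] l
  by (subst distributed_nn_integral[symmetric, OF D]) (auto simp: ennreal_mult')

lemma (in prob_space) ties_null:
  assumes l: "0 < l" and DX: "distributed M lborel X (exponential_density l)"
    and DY: "distributed M lborel Y (exponential_density l)"
    and ind: "indep_var borel X borel Y"
  shows "AE \<omega> in M. X \<omega> \<noteq> Y \<omega>"
proof -
  have ind': "indep_var lborel X lborel Y"
    using ind unfolding indep_var_def indep_vars_def2
    by (simp add: case_bool_if if_distrib cong: if_cong)
  have J: "distributed M (lborel \<Otimes>\<^sub>M lborel) (\<lambda>x. (X x, Y x))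
      (\<lambda>(x, y). ennreal (exponential_density l x) * ennreal (exponential_density l y))"
    by (rule distributed_joint_indep[OF _ _ DX DY ind']) (auto intro: lborel.sigma_finite_measure_axioms)
  define D where "D = {(x, y::real). x = y}"
  have Ds: "D \<in> sets (lborel \<Otimes>\<^sub>M lborel)"
  proof -
    have "(\<lambda>p::real\<times>real. fst p - snd p) \<in> borel_measurable (lborel \<Otimes>\<^sub>M lborel)" by measurable
    then have "(\<lambda>p::real\<times>real. fst p - snd p) -` {0} \<inter> space (lborel \<Otimes>\<^sub>M lborel) \<in> sets (lborel \<Otimes>\<^sub>M lborel)"
      by (rule measurable_sets) simp
    moreover have "(\<lambda>p::real\<times>real. fst p - snd p) -` {0} \<inter> space (lborel \<Otimes>\<^sub>M lborel) = D"
      by (auto simp: D_def space_pair_measure)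
    ultimately show ?thesis by simp
  qed
  have Dnull: "D \<in> null_sets (lborel \<Otimes>\<^sub>M lborel)"
  proof -
    have "emeasure (lborel \<Otimes>\<^sub>M lborel) D = (\<integral>\<^sup>+ x. emeasure lborel (Pair x -` D) \<partial>lborel)"
      by (rule lborel.emeasure_pair_measure_alt[OF Ds])
    also have "\<dots> = (\<integral>\<^sup>+ x. 0 \<partial>lborel)"
    proof -
      have "Pair x -` D = {x}" for x by (auto simp: D_def)
      then show ?thesis by simp
    qed
    finally show ?thesis using Ds by (simp add: null_sets_def)
  qed
  have "emeasure M {\<omega> \<in> space M. X \<omega> = Y \<omega>} = emeasure (distr M (lborel \<Otimes>\<^sub>M lborel) (\<lambda>x. (X x, Y x))) D"
    using distributed_measurable[OF J] Ds
    by (subst emeasure_distr) (auto simp: D_def intro!: arg_cong[where f="emeasure M"])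
  also have "\<dots> = emeasure (density (lborel \<Otimes>\<^sub>M lborel) (\<lambda>(x, y). ennreal (exponential_density l x) * ennreal (exponential_density l y))) D"
    using J by (simp add: distributed_def)
  also have "\<dots> = 0"
    using Dnull by (subst emeasure_density) (auto intro!: nn_integral_null_set simp: Ds)
  finally have "emeasure M {\<omega> \<in> space M. X \<omega> = Y \<omega>} = 0" .
  then show ?thesis
    using distributed_measurable[OF DX] distributed_measurable[OF DY]
    by (subst AE_iff_measurable[OF _ refl]) auto
qed

lemma strict_min_exists:
  fixes f :: "nat \<Rightarrow> real"
  assumes "finite G" "j0 \<in> G" "\<And>i j. i \<in> G \<Longrightarrow> j \<in> G \<Longrightarrow> i \<noteq> j \<Longrightarrow> f i \<noteq> f j"
  shows "\<exists>r\<in>G. f r \<le> f j0 \<and> (\<forall>j\<in>G. j \<noteq> r \<longrightarrow> f r < f j)"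
proof -
  have ne: "f ` G \<noteq> {}" using assms(2) by auto
  obtain r where r: "r \<in> G" "f r = Min (f ` G)" using Min_in[OF finite_imageI[OF assms(1)] ne] by auto
  have le: "f r \<le> f j" if "j \<in> G" for j using r that assms(1) by simp
  show ?thesis
  proof (intro bexI[OF _ r(1)] conjI ballI impI)
    show "f r \<le> f j0" using le assms(2) .
  next
    fix j assume "j \<in> G" "j \<noteq> r"
    then show "f r < f j" using le[of j] assms(3)[of r j] r(1) by fastforce
  qed
qed

lemma (in prob_space) per_n:
  fixes P :: "nat \<Rightarrow> 'a \<Rightarrow> real \<times> (real ^ 'k::finite)" and X :: "node set \<Rightarrow> nat \<Rightarrow> 'a \<Rightarrow> real"
    and g :: real and d :: "real \<times> (real ^ 'k)" and lam eps :: real and n :: nat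
  assumes lam: "0 < lam" and n1: "1 \<le> n" and eps: "0 < eps" "eps \<le> 1"
    and Pd: "\<And>i. i < n \<Longrightarrow> distr M borel (P i) = profile_distr"
    and Pm: "\<And>i. i < n \<Longrightarrow> P i \<in> borel_measurable M"
    and Xd: "\<And>e k. e \<in> node_pairs n \<Longrightarrow> distributed M lborel (X e k) (exponential_density lam)"
    and ind: "indep_sets (case_sum (\<lambda>i. rv_events M borel (P i)) (\<lambda>(e, k). rv_events M borel (X e k))) (II n)"
  defines "p \<equiv> measure profile_distr {x. g \<le> x \<bullet> d}"
  defines "c \<equiv> 1 - exp (- eps * lam)"
  shows "(\<integral>\<^sup>+\<omega>. ennreal (deliv_time n g (\<lambda>i. P i \<omega>) d (\<lambda>e. meet_times (\<lambda>k. X e k \<omega>))) \<partial>M)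
           \<le> ennreal ((1 - p*c)^n / lam + 1/(2*lam) + c/lam)"
    and "ennreal ((1 - (1 - p*c)^n) * (1/(2*lam) - eps))
           \<le> (\<integral>\<^sup>+\<omega>. ennreal (deliv_time n g (\<lambda>i. P i \<omega>) d (\<lambda>e. meet_times (\<lambda>k. X e k \<omega>))) \<partial>M)"
proof -
  define Z where "Z = Zf P X"
  define T where "T \<omega> = deliv_time n g (\<lambda>i. P i \<omega>) d (\<lambda>e. meet_times (\<lambda>k. X e k \<omega>))" for \<omega>
  have Xm[measurable]: "X e k \<in> borel_measurable M" if "e \<in> node_pairs n" for e k
    using distributed_measurable[OF Xd[OF that]] by simp
  have indZ: "indep_vars (\<lambda>_. borel) Z (II n)"
    unfolding Z_def by (rule master_indep[OF Pm Xm ind]) auto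
  have Zm[measurable]: "Z j \<in> borel_measurable M" if "j \<in> II n" for j
    using indZ that unfolding indep_vars_def by auto
  define Sv where "Sv \<omega> = restrict (\<lambda>j. Z j \<omega>) (SA n)" for \<omega>
  define Dv where "Dv i \<omega> = restrict (\<lambda>j. Z j \<omega>) {iE, iY i}" for i \<omega>
  define De where "De \<omega> = restrict (\<lambda>j. Z j \<omega>) {iE}" for \<omega>
  define E where "E \<omega> = X {Src, Dst} 0 \<omega>" for \<omega>
  define a where "a j \<omega> = X {Src, Rel j} 0 \<omega>" for j \<omega>
  define Y where "Y j \<omega> = X {Rel j, Dst} 0 \<omega>" for j \<omega>
  have ev_S: "cmp (Inl j) (Sv \<omega>) = P j \<omega>" "fc (iA j) (Sv \<omega>) = a j \<omega>" if "j < n" for j \<omega>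
    using that by (auto simp: Sv_def cmp_def fc_def SA_def Z_def Zf_def iA_def a_def)
  have ev_D: "Ev (Dv i \<omega>) = max 0 (E \<omega>)" "Yv i (Dv i \<omega>) = max 0 (Y i \<omega>)" "Ev (De \<omega>) = max 0 (E \<omega>)" for i \<omega>
    by (auto simp: Dv_def De_def Ev_def Yv_def fc_def Z_def Zf_def iE_def iY_def E_def Y_def)
  have Svm[measurable]: "Sv \<in> measurable M (PiM (SA n) (\<lambda>_. borel))"
    unfolding Sv_def by (rule measurable_restrict) (use idx_facts(1) Zm in blast)
  have Dvm[measurable]: "Dv i \<in> measurable M (PiM {iE, iY i} (\<lambda>_. borel))" if "i < n" for i
    unfolding Dv_def by (rule measurable_restrict) (use idx_facts(2)[OF that] Zm in blast)
  have Dem[measurable]: "De \<in> measurable M (PiM {iE} (\<lambda>_. borel))"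
    unfolding De_def by (rule measurable_restrict) (use idx_facts(3) Zm in blast)
  have nnAE: "AE \<omega> in M. \<forall>e\<in>node_pairs n. \<forall>k. 0 \<le> X e k \<omega>"
  proof (intro AE_finite_allI[OF finite_node_pairs])
    fix e assume "e \<in> node_pairs n"
    then show "AE \<omega> in M. \<forall>k. 0 \<le> X e k \<omega>"
      by (subst AE_all_countable) (auto intro: exp_nonneg_AE Xd)
  qed
  have a_exp: "distributed M lborel (a j) (exponential_density lam)" if "j < n" for j
    unfolding a_def by (rule Xd[OF np_SR[OF that]])
  have Y_exp: "distributed M lborel (Y j) (exponential_density lam)" if "j < n" for j
    unfolding Y_def by (rule Xd[OF np_RD[OF that]])
  have E_exp: "distributed M lborel E (exponential_density lam)"
    unfolding E_def by (rule Xd[OF np_SD])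
  have tiesAE: "AE \<omega> in M. \<forall>i\<in>{..<n}. \<forall>j\<in>{..<n}. i \<noteq> j \<longrightarrow> a i \<omega> \<noteq> a j \<omega>"
  proof (intro AE_finite_allI finite_lessThan)
    fix i j assume i: "i \<in> {..<n}" and j: "j \<in> {..<n}"
    show "AE \<omega> in M. i \<noteq> j \<longrightarrow> a i \<omega> \<noteq> a j \<omega>"
    proof (cases "i = j")
      case True then show ?thesis by simp
    next
      case False
      have iv: "indep_var borel (\<lambda>\<omega>. fc (iA i) (restrict (\<lambda>j. Z j \<omega>) {iA i})) borel (\<lambda>\<omega>. fc (iA j) (restrict (\<lambda>j. Z j \<omega>) {iA j}))"
        by (rule indep_restrict_var[OF indZ idx_facts(5) idx_facts(5) idx_facts(9)[OF False]]) (use i j in auto)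
      have e1: "(\<lambda>\<omega>. fc (iA i) (restrict (\<lambda>j. Z j \<omega>) {iA i})) = a i" for i
        by (rule ext) (simp add: fc_def Z_def Zf_def iA_def a_def)
      have "indep_var borel (a i) borel (a j)" using iv unfolding e1 .
      then have "AE \<omega> in M. a i \<omega> \<noteq> a j \<omega>"
        using i j by (intro ties_null[OF lam a_exp a_exp]) auto
      then show ?thesis by auto
    qed
  qed
  have Pev: "prob {\<omega> \<in> space M. g \<le> P j \<omega> \<bullet> d} = p" if "j < n" for j
  proof -
    have "prob {\<omega> \<in> space M. g \<le> P j \<omega> \<bullet> d} = measure (distr M borel (P j)) {x. g \<le> x \<bullet> d}"
      using Pm[OF that] by (subst measure_distr) (auto simp: vimage_def Int_def conj_commute)
    then show ?thesis using Pd[OF that] by (simp add: p_def)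
  qed
  have aev: "prob {\<omega> \<in> space M. a j \<omega> \<le> eps} = c" if "j < n" for j
    using exponential_distributedD_le[OF a_exp[OF that] _ lam, of eps] eps by (simp add: c_def)
  have GAev: "prob {\<omega> \<in> space M. g \<le> P j \<omega> \<bullet> d \<and> a j \<omega> \<le> eps} = p * c" if j: "j < n" for j
  proof -
    define A :: "nat + node set \<times> nat \<Rightarrow> (real \<times> (real ^ 'k)) set"
      where "A i = (if i = Inl j then {x::real \<times> (real ^ 'k). g \<le> x \<bullet> d} else {x. fst x \<le> eps})" for i
    have ne: "Inl j \<noteq> iA j" by (simp add: iA_def)
    have sub: "{Inl j, iA j} \<subseteq> II n" using j idx_facts(5)[OF j] by auto
    have "prob (\<Inter>i\<in>{Inl j, iA j}. Z i -` A i \<inter> space M) = (\<Prod>i\<in>{Inl j, iA j}. prob (Z i -` A i \<inter> space M))"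
    proof (rule indep_varsD[OF indZ _ _ sub])
      have "{x::real \<times> (real ^ 'k). fst x \<le> eps} \<in> sets borel"
        by (intro borel_closed closed_Collect_le continuous_intros)
      moreover have "{x::real \<times> (real ^ 'k). g \<le> x \<bullet> d} \<in> sets borel" by measurable
      ultimately show "\<And>i. i \<in> {Inl j, iA j} \<Longrightarrow> A i \<in> sets borel" by (auto simp: A_def)
    qed auto
    moreover have "(\<Inter>i\<in>{Inl j, iA j}. Z i -` A i \<inter> space M) = {\<omega> \<in> space M. g \<le> P j \<omega> \<bullet> d \<and> a j \<omega> \<le> eps}"
      using ne by (auto simp: A_def Z_def Zf_def iA_def a_def)
    moreover have "Z (Inl j) -` A (Inl j) \<inter> space M = {\<omega> \<in> space M. g \<le> P j \<omega> \<bullet> d}"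
      by (auto simp: A_def Z_def Zf_def)
    moreover have "Z (iA j) -` A (iA j) \<inter> space M = {\<omega> \<in> space M. a j \<omega> \<le> eps}"
      using ne by (auto simp: A_def Z_def Zf_def iA_def a_def)
    ultimately show ?thesis using ne Pev[OF j] aev[OF j] by simp
  qed
  have qval: "prob {\<omega> \<in> space M. \<forall>j\<in>{..<n}. \<not> (g \<le> P j \<omega> \<bullet> d \<and> a j \<omega> \<le> eps)} = (1 - p * c) ^ n"
  proof -
    define K where "K j = {Inl j, iA j}" for j
    have indK: "indep_vars (\<lambda>j. PiM (K j) (\<lambda>_. borel)) (\<lambda>j \<omega>. restrict (\<lambda>i. Z i \<omega>) (K j)) {..<n}"
    proof (rule indep_vars_restrict[OF indZ])
      fix j assume "j \<in> {..<n}" then show "K j \<subseteq> II n"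
        using idx_facts(5)[of j n] by (auto simp: K_def)
    next
      show "disjoint_family_on K {..<n}"
        unfolding disjoint_family_on_def K_def using idx_facts(10) by blast
    qed
    define A where "A j = {x \<in> space (PiM (K j) (\<lambda>_. borel :: (real \<times> (real ^ 'k)) measure)). \<not> (g \<le> cmp (Inl j) x \<bullet> d \<and> fc (iA j) x \<le> eps)}" for j
    have As: "A j \<in> sets (PiM (K j) (\<lambda>_. borel))" for j unfolding A_def by measurable
    have "prob (\<Inter>j\<in>{..<n}. (\<lambda>\<omega>. restrict (\<lambda>i. Z i \<omega>) (K j)) -` A j \<inter> space M)
        = (\<Prod>j\<in>{..<n}. prob ((\<lambda>\<omega>. restrict (\<lambda>i. Z i \<omega>) (K j)) -` A j \<inter> space M))"
      by (rule indep_varsD[OF indK]) (use n1 As in \<open>auto simp: lessThan_empty_iff\<close>)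
    moreover have "(\<lambda>\<omega>. restrict (\<lambda>i. Z i \<omega>) (K j)) -` A j \<inter> space M = space M - {\<omega> \<in> space M. g \<le> P j \<omega> \<bullet> d \<and> a j \<omega> \<le> eps}" for j
      by (auto simp: A_def K_def cmp_def fc_def Z_def Zf_def iA_def a_def space_PiM)
    moreover have "(\<Inter>j\<in>{..<n}. space M - {\<omega> \<in> space M. g \<le> P j \<omega> \<bullet> d \<and> a j \<omega> \<le> eps})
        = {\<omega> \<in> space M. \<forall>j\<in>{..<n}. \<not> (g \<le> P j \<omega> \<bullet> d \<and> a j \<omega> \<le> eps)}"
      using n1 by (auto simp: lessThan_empty_iff)
    moreover have "prob (space M - {\<omega> \<in> space M. g \<le> P j \<omega> \<bullet> d \<and> a j \<omega> \<le> eps}) = 1 - p * c" if "j < n" for j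
    proof -
      have m1[measurable]: "(\<lambda>\<omega>. P j \<omega> \<bullet> d) \<in> borel_measurable M"
        using Pm[OF that] by (intro borel_measurable_inner) auto
      have m2[measurable]: "a j \<in> borel_measurable M"
        unfolding a_def by (rule Xm[OF np_SR[OF that]])
      have "{\<omega> \<in> space M. g \<le> P j \<omega> \<bullet> d \<and> a j \<omega> \<le> eps} \<in> events"
        by measurable
      then show ?thesis using prob_compl GAev[OF that] by simp
    qed
    ultimately show ?thesis by simp
  qed
  have c0: "0 \<le> c" unfolding c_def using eps lam by (simp add: mult_pos_pos)
  have c1: "c \<le> 1" unfolding c_def by simp
  have Em[measurable]: "E \<in> borel_measurable M" unfolding E_def by (rule Xm[OF np_SD])
  have Ym[measurable]: "Y i \<in> borel_measurable M" if "i < n" for i unfolding Y_def by (rule Xm[OF np_RD[OF that]])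
  have am[measurable]: "a i \<in> borel_measurable M" if "i < n" for i unfolding a_def by (rule Xm[OF np_SR[OF that]])
  have indEY: "indep_var borel E borel (Y i)" if i: "i < n" for i
  proof -
    have dj: "{iE} \<inter> {iY i} = {}" using idx_facts(8)[of i] by blast
    have iv: "indep_var borel (\<lambda>\<omega>. fc iE (restrict (\<lambda>j. Z j \<omega>) {iE})) borel (\<lambda>\<omega>. fc (iY i) (restrict (\<lambda>j. Z j \<omega>) {iY i}))"
      by (rule indep_restrict_var[OF indZ idx_facts(3) idx_facts(4)[OF i] dj]) auto
    have e1: "(\<lambda>\<omega>. fc iE (restrict (\<lambda>j. Z j \<omega>) {iE})) = E"
      by (rule ext) (simp add: fc_def Z_def Zf_def iE_def E_def)
    have e2: "(\<lambda>\<omega>. fc (iY i) (restrict (\<lambda>j. Z j \<omega>) {iY i})) = Y i"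
      by (rule ext) (simp add: fc_def Z_def Zf_def iY_def Y_def)
    show ?thesis using iv unfolding e1 e2 .
  qed
  have Eint: "(\<integral>\<^sup>+\<omega>. ennreal (Ev (De \<omega>)) \<partial>M) = ennreal (1/lam)"
    using exp_nn_integral[OF lam E_exp] by (simp add: ev_D ennreal_max_0)
  have minint: "(\<integral>\<^sup>+\<omega>. ennreal (min (E \<omega>) (Y i \<omega>)) \<partial>M) = ennreal (1/(2*lam))" if i: "i < n" for i
  proof -
    have "distributed M lborel (\<lambda>\<omega>. min (E \<omega>) (Y i \<omega>)) (exponential_density (lam + lam))"
      by (rule exponential_distributed_min[OF lam lam E_exp Y_exp[OF i] indEY[OF i]])
    from exp_nn_integral[OF _ this] lam show ?thesis by simp
  qed
  have Yle: "emeasure M {\<omega> \<in> space M. max 0 (Y i \<omega>) < eps} \<le> ennreal c" if i: "i < n" for i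
  proof -
    have "emeasure M {\<omega> \<in> space M. max 0 (Y i \<omega>) < eps} \<le> emeasure M {\<omega> \<in> space M. Y i \<omega> \<le> eps}"
      using Ym[OF i] by (intro emeasure_mono) auto
    also have "\<dots> = ennreal (prob {\<omega> \<in> space M. Y i \<omega> \<le> eps})"
      using Ym[OF i] by (simp add: emeasure_eq_measure)
    also have "prob {\<omega> \<in> space M. Y i \<omega> \<le> eps} = c"
      using exponential_distributedD_le[OF Y_exp[OF i] _ lam, of eps] eps by (simp add: c_def)
    finally show ?thesis .
  qed
  have u1int: "(\<integral>\<^sup>+\<omega>. ennreal (u1 eps i (Dv i \<omega>)) \<partial>M) \<le> ennreal (1/(2*lam) + c/lam)" if i: "i < n" for i
  proof -
    have Ymi[measurable]: "Y i \<in> borel_measurable M" using Ym[OF i] .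
    define R where "R \<omega> = restrict (\<lambda>j. Z j \<omega>) {iY i}" for \<omega>
    define f where "f x = (if Yv i x < eps then 1 else (0::real))" for x :: "nat + node set \<times> nat \<Rightarrow> real \<times> (real ^ 'k)"
    have fm[measurable]: "f \<in> borel_measurable (PiM {iY i} (\<lambda>_. borel))" unfolding f_def by measurable
    have evR: "Yv i (R \<omega>) = max 0 (Y i \<omega>)" for \<omega>
      by (simp add: R_def Yv_def fc_def Z_def Zf_def iY_def Y_def)
    have dj: "{iY i} \<inter> {iE} = {}" by (rule idx_facts(8))
    have prodint: "(\<integral>\<^sup>+\<omega>. ennreal (f (R \<omega>)) * ennreal (Ev (De \<omega>)) \<partial>M)
        = (\<integral>\<^sup>+\<omega>. ennreal (f (R \<omega>)) \<partial>M) * (\<integral>\<^sup>+\<omega>. ennreal (Ev (De \<omega>)) \<partial>M)"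
      unfolding R_def De_def
      by (rule indep_restrict_nn[OF indZ idx_facts(4)[OF i] idx_facts(3) dj fm meas_Ev])
         (auto simp: f_def funs_nonneg)
    have fint: "(\<integral>\<^sup>+\<omega>. ennreal (f (R \<omega>)) \<partial>M) = emeasure M {\<omega> \<in> space M. max 0 (Y i \<omega>) < eps}"
    proof -
      have "(\<integral>\<^sup>+\<omega>. ennreal (f (R \<omega>)) \<partial>M) = (\<integral>\<^sup>+\<omega>. indicator {\<omega> \<in> space M. max 0 (Y i \<omega>) < eps} \<omega> \<partial>M)"
        by (intro nn_integral_cong) (auto simp: f_def evR)
      also have "\<dots> = emeasure M {\<omega> \<in> space M. max 0 (Y i \<omega>) < eps}"
        by (intro nn_integral_indicator) measurable
      finally show ?thesis .
    qed
    have pw: "ennreal (u1 eps i (Dv i \<omega>)) = ennreal (min (E \<omega>) (Y i \<omega>)) + ennreal (f (R \<omega>)) * ennreal (Ev (De \<omega>))" for \<omega>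
    proof -
      have "u1 eps i (Dv i \<omega>) = max 0 (min (E \<omega>) (Y i \<omega>)) + f (R \<omega>) * Ev (De \<omega>)"
        by (simp add: u1_def ev_D evR f_def max_min_distrib2)
      then show ?thesis
        by (simp add: f_def funs_nonneg ennreal_max_0 ennreal_plus[symmetric] ennreal_mult'[symmetric])
    qed
    have "(\<integral>\<^sup>+\<omega>. ennreal (u1 eps i (Dv i \<omega>)) \<partial>M)
        = (\<integral>\<^sup>+\<omega>. ennreal (min (E \<omega>) (Y i \<omega>)) \<partial>M) + (\<integral>\<^sup>+\<omega>. ennreal (f (R \<omega>)) * ennreal (Ev (De \<omega>)) \<partial>M)"
    proof -
      have Rm[measurable]: "R \<in> measurable M (PiM {iY i} (\<lambda>_. borel))"
        unfolding R_def by (rule measurable_restrict) (use idx_facts(4)[OF i] Zm in blast)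
      have m1: "(\<lambda>x. ennreal (f (R x))) \<in> borel_measurable M"
        using measurable_compose[OF Rm fm] by simp
      have m2: "(\<lambda>x. ennreal (Ev (De x))) \<in> borel_measurable M"
        using measurable_compose[OF Dem meas_Ev] by simp
      have m3: "(\<lambda>x. ennreal (min (E x) (Y i x))) \<in> borel_measurable M" by measurable
      show ?thesis unfolding pw using m1 m2 m3 by (intro nn_integral_add) auto
    qed
    also have "\<dots> \<le> ennreal (1/(2*lam)) + ennreal c * ennreal (1/lam)"
      unfolding prodint fint minint[OF i] Eint using Yle[OF i] by (intro add_left_mono mult_right_mono) auto
    also have "\<dots> = ennreal (1/(2*lam)) + ennreal (c * (1/lam))"
      by (simp only: ennreal_mult'[OF c0])
    also have "\<dots> = ennreal (1/(2*lam) + c * (1/lam))"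
      by (rule ennreal_plus[symmetric]) (use lam c0 in auto)
    finally show ?thesis by simp
  qed
  have l1int: "ennreal (1/(2*lam) - eps) \<le> (\<integral>\<^sup>+\<omega>. ennreal (l1 eps i (Dv i \<omega>)) \<partial>M)" if i: "i < n" for i
  proof -
    have pw: "ennreal (min (E \<omega>) (Y i \<omega>)) \<le> ennreal (l1 eps i (Dv i \<omega>)) + ennreal eps" for \<omega>
    proof -
      have "min (E \<omega>) (Y i \<omega>) \<le> l1 eps i (Dv i \<omega>) + eps"
        using eps by (auto simp: l1_def ev_D)
      then have "ennreal (min (E \<omega>) (Y i \<omega>)) \<le> ennreal (l1 eps i (Dv i \<omega>) + eps)" by (rule ennreal_leI)
      then show ?thesis using eps by (simp add: funs_nonneg)
    qed
    have "ennreal (1/(2*lam)) \<le> (\<integral>\<^sup>+\<omega>. ennreal (l1 eps i (Dv i \<omega>)) + ennreal eps \<partial>M)"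
      unfolding minint[OF i, symmetric] by (intro nn_integral_mono pw)
    also have "\<dots> = (\<integral>\<^sup>+\<omega>. ennreal (l1 eps i (Dv i \<omega>)) \<partial>M) + ennreal eps"
      using Dvm[OF i] by (subst nn_integral_add) (auto simp: emeasure_space_1)
    finally have "ennreal (1/(2*lam)) \<le> (\<integral>\<^sup>+\<omega>. ennreal (l1 eps i (Dv i \<omega>)) \<partial>M) + ennreal eps" .
    then have "ennreal (1/(2*lam)) - ennreal eps \<le> (\<integral>\<^sup>+\<omega>. ennreal (l1 eps i (Dv i \<omega>)) \<partial>M)"
      unfolding ennreal_minus_le_iff by (simp add: ac_simps)
    then show ?thesis using eps by (simp add: ennreal_minus)
  qed
  define Bset where "Bset i = {\<omega> \<in> space M. Bp n g d i (Sv \<omega>)}" for i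
  define Beset where "Beset i = {\<omega> \<in> space M. Bp n g d i (Sv \<omega>) \<and> fc (iA i) (Sv \<omega>) \<le> eps}" for i
  have Bsets: "Bset i \<in> sets M" "Beset i \<in> sets M" for i
    unfolding Bset_def Beset_def by measurable
  have Bint: "(\<integral>\<^sup>+\<omega>. ennreal (Bf n g d i (Sv \<omega>)) \<partial>M) = emeasure M (Bset i)" for i
  proof -
    have "(\<integral>\<^sup>+\<omega>. ennreal (Bf n g d i (Sv \<omega>)) \<partial>M) = (\<integral>\<^sup>+\<omega>. indicator (Bset i) \<omega> \<partial>M)"
      by (intro nn_integral_cong) (auto simp: Bf_def Bset_def)
    then show ?thesis using Bsets(1) by simp
  qed
  have Beint: "(\<integral>\<^sup>+\<omega>. ennreal (Bfe n g d eps i (Sv \<omega>)) \<partial>M) = emeasure M (Beset i)" for i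
  proof -
    have "(\<integral>\<^sup>+\<omega>. ennreal (Bfe n g d eps i (Sv \<omega>)) \<partial>M) = (\<integral>\<^sup>+\<omega>. indicator (Beset i) \<omega> \<partial>M)"
      by (intro nn_integral_cong) (auto simp: Bfe_def Beset_def)
    then show ?thesis using Bsets(2) by simp
  qed
  have Bdisj: "\<not> (Bp n g d i x \<and> Bp n g d j x)" if "i < n" "j < n" "i \<noteq> j" for i j x
  proof
    assume "Bp n g d i x \<and> Bp n g d j x"
    then have hi: "g \<le> cmp (Inl i) x \<bullet> d" "fc (iA i) x \<le> real n"
        "\<forall>k\<in>{..<n}. k \<noteq> i \<longrightarrow> g \<le> cmp (Inl k) x \<bullet> d \<longrightarrow> fc (iA k) x \<le> real n \<longrightarrow> fc (iA i) x < fc (iA k) x"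
      and hj: "g \<le> cmp (Inl j) x \<bullet> d" "fc (iA j) x \<le> real n"
        "\<forall>k\<in>{..<n}. k \<noteq> j \<longrightarrow> g \<le> cmp (Inl k) x \<bullet> d \<longrightarrow> fc (iA k) x \<le> real n \<longrightarrow> fc (iA j) x < fc (iA k) x"
      unfolding Bp_def by blast+
    have "fc (iA i) x < fc (iA j) x" using hi(3) that hj(1,2) by auto
    moreover have "fc (iA j) x < fc (iA i) x" using hj(3) that hi(1,2) by auto
    ultimately show False by simp
  qed
  have Bsum: "(\<Sum>i<n. emeasure M (Bset i)) \<le> 1"
  proof -
    have "(\<Sum>i<n. emeasure M (Bset i)) = emeasure M (\<Union>i<n. Bset i)"
    proof (rule sum_emeasure)
      show "disjoint_family_on Bset {..<n}"
        unfolding disjoint_family_on_def Bset_def using Bdisj by blast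
    qed (use Bsets in auto)
    also have "\<dots> \<le> emeasure M (space M)" by (rule emeasure_space)
    finally show ?thesis by (simp add: emeasure_space_1)
  qed
  have exist_min: "\<exists>r<n. Bp n g d r (Sv \<omega>) \<and> a r \<omega> \<le> eps"
    if om: "\<forall>i\<in>{..<n}. \<forall>j\<in>{..<n}. i \<noteq> j \<longrightarrow> a i \<omega> \<noteq> a j \<omega>" and j0: "j0 < n" "g \<le> P j0 \<omega> \<bullet> d" "a j0 \<omega> \<le> eps"
    for \<omega> j0
  proof -
    define G where "G = {j\<in>{..<n}. g \<le> P j \<omega> \<bullet> d \<and> a j \<omega> \<le> real n}"
    have "j0 \<in> G" using j0 eps n1 by (auto simp: G_def)
    from strict_min_exists[where G=G and f="\<lambda>j. a j \<omega>", OF _ this] om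
    obtain r where r: "r \<in> G" "a r \<omega> \<le> a j0 \<omega>" "\<forall>j\<in>G. j \<noteq> r \<longrightarrow> a r \<omega> < a j \<omega>"
      by (auto simp: G_def)
    have "Bp n g d r (Sv \<omega>)"
      using r unfolding Bp_def G_def by (auto simp: ev_S)
    then show ?thesis using r j0 by (auto simp: G_def)
  qed
  define F where "F = {\<omega> \<in> space M. \<forall>j\<in>{..<n}. \<not> (g \<le> P j \<omega> \<bullet> d \<and> a j \<omega> \<le> eps)}"
  have Fs: "F \<in> sets M"
  proof -
    have "F = (\<Inter>j\<in>{..<n}. space M - {\<omega> \<in> space M. g \<le> P j \<omega> \<bullet> d \<and> a j \<omega> \<le> eps})"
      using n1 by (auto simp: F_def lessThan_empty_iff)
    also have "\<dots> \<in> sets M"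
    proof (intro sets.finite_INT sets.Diff sets.top)
      fix j assume j: "j \<in> {..<n}"
      have m1[measurable]: "(\<lambda>\<omega>. P j \<omega> \<bullet> d) \<in> borel_measurable M"
        using Pm j by (intro borel_measurable_inner) auto
      have m2[measurable]: "a j \<in> borel_measurable M" using am j by auto
      show "{\<omega> \<in> space M. g \<le> P j \<omega> \<bullet> d \<and> a j \<omega> \<le> eps} \<in> sets M" by measurable
    qed (use n1 in \<open>auto simp: lessThan_empty_iff\<close>)
    finally show ?thesis .
  qed
  have Besum: "ennreal (1 - (1 - p*c)^n) \<le> (\<Sum>i<n. emeasure M (Beset i))"
  proof -
    have "ennreal (1 - (1 - p*c)^n) = ennreal (prob (space M - F))"
      using prob_compl[OF Fs] qval unfolding F_def by simp
    also have "\<dots> = emeasure M (space M - F)" using Fs by (simp add: emeasure_eq_measure)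
    also have "\<dots> \<le> emeasure M (\<Union>i<n. Beset i)"
    proof (rule emeasure_mono_AE)
      show "(\<Union>i<n. Beset i) \<in> sets M" using Bsets by auto
      show "AE x in M. x \<in> space M - F \<longrightarrow> x \<in> (\<Union>i<n. Beset i)"
        using tiesAE
      proof eventually_elim
        case (elim \<omega>)
        show ?case
        proof
          assume "\<omega> \<in> space M - F"
          then obtain j0 where "j0 < n" "g \<le> P j0 \<omega> \<bullet> d" "a j0 \<omega> \<le> eps" "\<omega> \<in> space M"
            by (auto simp: F_def)
          with exist_min[OF elim] obtain r where "r < n" "Bp n g d r (Sv \<omega>)" "a r \<omega> \<le> eps" by blast
          then show "\<omega> \<in> (\<Union>i<n. Beset i)" using \<open>\<omega> \<in> space M\<close> by (auto simp: Beset_def ev_S)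
        qed
      qed
    qed
    also have "\<dots> = (\<Sum>i<n. emeasure M (Beset i))"
    proof (rule sum_emeasure[symmetric])
      show "disjoint_family_on Beset {..<n}"
        unfolding disjoint_family_on_def Beset_def using Bdisj by blast
    qed (use Bsets in auto)
    finally show ?thesis .
  qed
  have Bp_eval: "Bp n g d r (Sv \<omega>) \<longleftrightarrow> g \<le> P r \<omega> \<bullet> d \<and> a r \<omega> \<le> real n \<and>
      (\<forall>j<n. j \<noteq> r \<longrightarrow> g \<le> P j \<omega> \<bullet> d \<longrightarrow> a j \<omega> \<le> real n \<longrightarrow> a r \<omega> < a j \<omega>)" if r: "r < n" for r \<omega>
    using r by (auto simp: Bp_def ev_S)
  have T_eq: "T \<omega> = min (E \<omega>) (Y r \<omega>)"
    if nn: "\<forall>e\<in>node_pairs n. \<forall>k. 0 \<le> X e k \<omega>" and r: "r < n" and B: "Bp n g d r (Sv \<omega>)"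
      and aY: "a r \<omega> \<le> Y r \<omega>" for r \<omega>
  proof -
    note Be = B[unfolded Bp_eval[OF r]]
    show ?thesis unfolding T_def E_def Y_def
      by (rule deliv_eq[where x="\<lambda>e k. X e k \<omega>"])
         (use nn np_SD np_SR np_RD r Be aY in \<open>auto simp: a_def Y_def\<close>)
  qed
  have T_le: "T \<omega> \<le> E \<omega>" if nn: "\<forall>e\<in>node_pairs n. \<forall>k. 0 \<le> X e k \<omega>" for \<omega>
    unfolding T_def E_def
    by (rule deliv_le[where x="\<lambda>e k. X e k \<omega>"]) (use nn np_SD in auto)
  have upw: "AE \<omega> in M. ennreal (T \<omega>) \<le> ennreal (nF n g d eps (Sv \<omega>)) * ennreal (Ev (De \<omega>))
      + (\<Sum>i<n. ennreal (Bf n g d i (Sv \<omega>)) * ennreal (u1 eps i (Dv i \<omega>)))"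
    using nnAE tiesAE
  proof eventually_elim
    case (elim \<omega>)
    have E0: "0 \<le> E \<omega>" using elim(1) np_SD by (auto simp: E_def)
    have Y0: "0 \<le> Y j \<omega>" if "j < n" for j using elim(1) np_RD[OF that] by (auto simp: Y_def)
    show ?case
    proof (cases "\<exists>j0<n. g \<le> P j0 \<omega> \<bullet> d \<and> a j0 \<omega> \<le> eps")
      case True
      then obtain j0 where j0: "j0 < n" "g \<le> P j0 \<omega> \<bullet> d" "a j0 \<omega> \<le> eps" by blast
      from exist_min[OF elim(2) j0] obtain r where r: "r < n" "Bp n g d r (Sv \<omega>)" "a r \<omega> \<le> eps" by blast
      have Tr: "T \<omega> \<le> u1 eps r (Dv r \<omega>)"
      proof (cases "eps \<le> Y r \<omega>")
        case True
        have "T \<omega> = min (E \<omega>) (Y r \<omega>)" using T_eq[OF elim(1) r(1,2)] r(3) True by simp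
        then show ?thesis using E0 Y0[OF r(1)] by (simp add: u1_def ev_D)
      next
        case False
        then show ?thesis using T_le[OF elim(1)] E0 Y0[OF r(1)] by (simp add: u1_def ev_D)
      qed
      have "ennreal (T \<omega>) \<le> ennreal (Bf n g d r (Sv \<omega>)) * ennreal (u1 eps r (Dv r \<omega>))"
        using r(2) Tr by (simp add: Bf_def ennreal_leI)
      also have "\<dots> \<le> (\<Sum>i<n. ennreal (Bf n g d i (Sv \<omega>)) * ennreal (u1 eps i (Dv i \<omega>)))"
        by (rule member_le_sum) (use r(1) in auto)
      also have "\<dots> \<le> ennreal (nF n g d eps (Sv \<omega>)) * ennreal (Ev (De \<omega>))
          + (\<Sum>i<n. ennreal (Bf n g d i (Sv \<omega>)) * ennreal (u1 eps i (Dv i \<omega>)))"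
        by (rule add_increasing) auto
      finally show ?thesis .
    next
      case False
      then have "nF n g d eps (Sv \<omega>) = 1" by (auto simp: nF_def ev_S)
      then have "ennreal (T \<omega>) \<le> ennreal (nF n g d eps (Sv \<omega>)) * ennreal (Ev (De \<omega>))"
        using T_le[OF elim(1)] E0 by (simp add: ev_D ennreal_leI)
      also have "\<dots> \<le> ennreal (nF n g d eps (Sv \<omega>)) * ennreal (Ev (De \<omega>))
          + (\<Sum>i<n. ennreal (Bf n g d i (Sv \<omega>)) * ennreal (u1 eps i (Dv i \<omega>)))"
        by (rule add_increasing2) auto
      finally show ?thesis .
    qed
  qed
  have lpw: "AE \<omega> in M. (\<Sum>i<n. ennreal (Bfe n g d eps i (Sv \<omega>)) * ennreal (l1 eps i (Dv i \<omega>))) \<le> ennreal (T \<omega>)"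
    using nnAE
  proof eventually_elim
    case (elim \<omega>)
    have E0: "0 \<le> E \<omega>" using elim(1) np_SD by (auto simp: E_def)
    have Y0: "0 \<le> Y j \<omega>" if "j < n" for j using elim(1) np_RD[OF that] by (auto simp: Y_def)
    show ?case
    proof (cases "\<exists>i<n. Bp n g d i (Sv \<omega>) \<and> a i \<omega> \<le> eps \<and> eps \<le> Y i \<omega>")
      case True
      then obtain i where i: "i < n" "Bp n g d i (Sv \<omega>)" "a i \<omega> \<le> eps" "eps \<le> Y i \<omega>" by blast
      have others: "ennreal (Bfe n g d eps j (Sv \<omega>)) * ennreal (l1 eps j (Dv j \<omega>)) = 0"
        if "j \<in> {..<n} - {i}" for j
        using Bdisj[of i j "Sv \<omega>"] i that by (auto simp: Bfe_def)
      have "(\<Sum>j<n. ennreal (Bfe n g d eps j (Sv \<omega>)) * ennreal (l1 eps j (Dv j \<omega>)))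
          = ennreal (Bfe n g d eps i (Sv \<omega>)) * ennreal (l1 eps i (Dv i \<omega>))
            + (\<Sum>j\<in>{..<n} - {i}. ennreal (Bfe n g d eps j (Sv \<omega>)) * ennreal (l1 eps j (Dv j \<omega>)))"
        by (rule sum.remove) (use i in auto)
      also have "(\<Sum>j\<in>{..<n} - {i}. ennreal (Bfe n g d eps j (Sv \<omega>)) * ennreal (l1 eps j (Dv j \<omega>))) = 0"
        by (rule sum.neutral) (use others in blast)
      also have "ennreal (Bfe n g d eps i (Sv \<omega>)) * ennreal (l1 eps i (Dv i \<omega>)) = ennreal (min (E \<omega>) (Y i \<omega>))"
        using i E0 Y0[OF i(1)] eps by (simp add: Bfe_def l1_def ev_D ev_S)
      also have "min (E \<omega>) (Y i \<omega>) = T \<omega>"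
        using T_eq[OF elim(1) i(1,2)] i(3,4) by simp
      finally show ?thesis by simp
    next
      case False
      have "ennreal (Bfe n g d eps j (Sv \<omega>)) * ennreal (l1 eps j (Dv j \<omega>)) = 0" if "j \<in> {..<n}" for j
      proof (cases "Bp n g d j (Sv \<omega>) \<and> a j \<omega> \<le> eps")
        case True
        with False that have "Y j \<omega> < eps" by auto
        then have "l1 eps j (Dv j \<omega>) = 0" using eps by (simp add: l1_def ev_D)
        then show ?thesis by simp
      next
        case False
        then have "Bfe n g d eps j (Sv \<omega>) = 0" using that by (auto simp: Bfe_def ev_S)
        then show ?thesis by simp
      qed
      then have S0: "(\<Sum>j<n. ennreal (Bfe n g d eps j (Sv \<omega>)) * ennreal (l1 eps j (Dv j \<omega>))) = 0"
        by (intro sum.neutral) blast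
      show ?thesis unfolding S0 by (rule zero_le)
    qed
  qed
  have pps: "prob_space (profile_distr :: (real \<times> (real ^ 'k)) measure)"
    by (rule prof_pos(2))
  have p0: "0 \<le> p" and p1: "p \<le> 1" unfolding p_def using prob_space.prob_le_1[OF pps] by auto
  have pc1: "p * c \<le> 1" using p0 p1 c0 c1 by (simp add: mult_le_one)
  have q0: "0 \<le> (1 - p*c)^n" using pc1 by simp
  have q1: "(1 - p*c)^n \<le> 1" using pc1 p0 c0 by (simp add: power_le_one)
  have nFint: "(\<integral>\<^sup>+\<omega>. ennreal (nF n g d eps (Sv \<omega>)) \<partial>M) = ennreal ((1 - p*c)^n)"
  proof -
    have "(\<integral>\<^sup>+\<omega>. ennreal (nF n g d eps (Sv \<omega>)) \<partial>M) = (\<integral>\<^sup>+\<omega>. indicator F \<omega> \<partial>M)"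
      by (intro nn_integral_cong) (auto simp: nF_def F_def ev_S)
    also have "\<dots> = emeasure M F" using Fs by simp
    also have "\<dots> = ennreal ((1 - p*c)^n)" using Fs qval by (simp add: emeasure_eq_measure F_def)
    finally show ?thesis .
  qed
  have prod1: "(\<integral>\<^sup>+\<omega>. ennreal (nF n g d eps (Sv \<omega>)) * ennreal (Ev (De \<omega>)) \<partial>M)
      = (\<integral>\<^sup>+\<omega>. ennreal (nF n g d eps (Sv \<omega>)) \<partial>M) * (\<integral>\<^sup>+\<omega>. ennreal (Ev (De \<omega>)) \<partial>M)"
    unfolding Sv_def De_def
    by (rule indep_restrict_nn[OF indZ idx_facts(1) idx_facts(3) idx_facts(7) meas_nF meas_Ev]) (auto simp: funs_nonneg)
  have prod2: "(\<integral>\<^sup>+\<omega>. ennreal (Bf n g d i (Sv \<omega>)) * ennreal (u1 eps i (Dv i \<omega>)) \<partial>M)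
      = (\<integral>\<^sup>+\<omega>. ennreal (Bf n g d i (Sv \<omega>)) \<partial>M) * (\<integral>\<^sup>+\<omega>. ennreal (u1 eps i (Dv i \<omega>)) \<partial>M)" if i: "i < n" for i
    unfolding Sv_def Dv_def
    by (rule indep_restrict_nn[OF indZ idx_facts(1) idx_facts(2)[OF i] idx_facts(6) meas_Bf meas_u1]) (auto simp: funs_nonneg)
  have prod3: "(\<integral>\<^sup>+\<omega>. ennreal (Bfe n g d eps i (Sv \<omega>)) * ennreal (l1 eps i (Dv i \<omega>)) \<partial>M)
      = (\<integral>\<^sup>+\<omega>. ennreal (Bfe n g d eps i (Sv \<omega>)) \<partial>M) * (\<integral>\<^sup>+\<omega>. ennreal (l1 eps i (Dv i \<omega>)) \<partial>M)" if i: "i < n" for i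
    unfolding Sv_def Dv_def
    by (rule indep_restrict_nn[OF indZ idx_facts(1) idx_facts(2)[OF i] idx_facts(6) meas_Bfe meas_l1]) (auto simp: funs_nonneg)
  have mA: "(\<lambda>\<omega>. ennreal (nF n g d eps (Sv \<omega>)) * ennreal (Ev (De \<omega>))) \<in> borel_measurable M"
    using measurable_compose[OF Svm meas_nF] measurable_compose[OF Dem meas_Ev] by measurable
  have mB: "(\<lambda>\<omega>. ennreal (Bf n g d i (Sv \<omega>)) * ennreal (u1 eps i (Dv i \<omega>))) \<in> borel_measurable M" if i: "i \<in> {..<n}" for i
  proof -
    have 1: "(\<lambda>\<omega>. Bf n g d i (Sv \<omega>)) \<in> borel_measurable M" using measurable_compose[OF Svm meas_Bf] by simp
    have 2: "(\<lambda>\<omega>. u1 eps i (Dv i \<omega>)) \<in> borel_measurable M" using measurable_compose[OF Dvm meas_u1] i by simp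
    show ?thesis using 1 2 by measurable
  qed
  have mC: "(\<lambda>\<omega>. ennreal (Bfe n g d eps i (Sv \<omega>)) * ennreal (l1 eps i (Dv i \<omega>))) \<in> borel_measurable M" if i: "i \<in> {..<n}" for i
  proof -
    have 1: "(\<lambda>\<omega>. Bfe n g d eps i (Sv \<omega>)) \<in> borel_measurable M" using measurable_compose[OF Svm meas_Bfe] by simp
    have 2: "(\<lambda>\<omega>. l1 eps i (Dv i \<omega>)) \<in> borel_measurable M" using measurable_compose[OF Dvm meas_l1] i by simp
    show ?thesis using 1 2 by measurable
  qed
  have "(\<integral>\<^sup>+\<omega>. ennreal (T \<omega>) \<partial>M) \<le> (\<integral>\<^sup>+\<omega>. ennreal (nF n g d eps (Sv \<omega>)) * ennreal (Ev (De \<omega>))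
      + (\<Sum>i<n. ennreal (Bf n g d i (Sv \<omega>)) * ennreal (u1 eps i (Dv i \<omega>))) \<partial>M)"
    by (rule nn_integral_mono_AE[OF upw])
  also have "\<dots> = (\<integral>\<^sup>+\<omega>. ennreal (nF n g d eps (Sv \<omega>)) * ennreal (Ev (De \<omega>)) \<partial>M)
      + (\<Sum>i<n. \<integral>\<^sup>+\<omega>. ennreal (Bf n g d i (Sv \<omega>)) * ennreal (u1 eps i (Dv i \<omega>)) \<partial>M)"
  proof -
    have sumeq: "(\<integral>\<^sup>+\<omega>. (\<Sum>i<n. ennreal (Bf n g d i (Sv \<omega>)) * ennreal (u1 eps i (Dv i \<omega>))) \<partial>M)
        = (\<Sum>i<n. \<integral>\<^sup>+\<omega>. ennreal (Bf n g d i (Sv \<omega>)) * ennreal (u1 eps i (Dv i \<omega>)) \<partial>M)"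
      by (rule nn_integral_sum[OF mB])
    have mS: "(\<lambda>\<omega>. \<Sum>i<n. ennreal (Bf n g d i (Sv \<omega>)) * ennreal (u1 eps i (Dv i \<omega>))) \<in> borel_measurable M"
      by (rule borel_measurable_sum[OF mB])
    show ?thesis using nn_integral_add[OF mA mS] sumeq by simp
  qed
  also have "\<dots> = ennreal ((1 - p*c)^n) * ennreal (1/lam)
      + (\<Sum>i<n. emeasure M (Bset i) * (\<integral>\<^sup>+\<omega>. ennreal (u1 eps i (Dv i \<omega>)) \<partial>M))"
    by (simp add: prod1 prod2 nFint Eint Bint)
  also have "\<dots> \<le> ennreal ((1 - p*c)^n) * ennreal (1/lam) + (\<Sum>i<n. emeasure M (Bset i) * ennreal (1/(2*lam) + c/lam))"
    by (intro add_left_mono sum_mono mult_left_mono u1int) auto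
  also have "\<dots> = ennreal ((1 - p*c)^n) * ennreal (1/lam) + (\<Sum>i<n. emeasure M (Bset i)) * ennreal (1/(2*lam) + c/lam)"
    by (simp add: sum_distrib_right)
  also have "\<dots> \<le> ennreal ((1 - p*c)^n) * ennreal (1/lam) + 1 * ennreal (1/(2*lam) + c/lam)"
    by (intro add_left_mono mult_right_mono Bsum) auto
  also have "\<dots> = ennreal ((1 - p*c)^n * (1/lam)) + ennreal (1/(2*lam) + c/lam)"
    by (simp only: ennreal_mult'[OF q0] mult_1)
  also have "\<dots> = ennreal ((1 - p*c)^n * (1/lam) + (1/(2*lam) + c/lam))"
    by (rule ennreal_plus[symmetric]) (use q0 lam c0 in auto)
  also have "\<dots> = ennreal ((1 - p*c)^n / lam + (1/(2*lam) + c/lam))"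
    by simp
  finally show "(\<integral>\<^sup>+\<omega>. ennreal (deliv_time n g (\<lambda>i. P i \<omega>) d (\<lambda>e. meet_times (\<lambda>k. X e k \<omega>))) \<partial>M)
           \<le> ennreal ((1 - p*c)^n / lam + 1/(2*lam) + c/lam)"
    by (simp add: T_def add.assoc)
  have "ennreal ((1 - (1 - p*c)^n) * (1/(2*lam) - eps)) = ennreal (1 - (1 - p*c)^n) * ennreal (1/(2*lam) - eps)"
    using q1 by (intro ennreal_mult') simp
  also have "\<dots> \<le> (\<Sum>i<n. emeasure M (Beset i)) * ennreal (1/(2*lam) - eps)"
    by (intro mult_right_mono Besum) auto
  also have "\<dots> = (\<Sum>i<n. emeasure M (Beset i) * ennreal (1/(2*lam) - eps))"
    by (simp add: sum_distrib_right)
  also have "\<dots> \<le> (\<Sum>i<n. emeasure M (Beset i) * (\<integral>\<^sup>+\<omega>. ennreal (l1 eps i (Dv i \<omega>)) \<partial>M))"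
    by (intro sum_mono mult_left_mono l1int) auto
  also have "\<dots> = (\<Sum>i<n. \<integral>\<^sup>+\<omega>. ennreal (Bfe n g d eps i (Sv \<omega>)) * ennreal (l1 eps i (Dv i \<omega>)) \<partial>M)"
    by (intro sum.cong refl) (simp add: prod3 Beint)
  also have "\<dots> = (\<integral>\<^sup>+\<omega>. (\<Sum>i<n. ennreal (Bfe n g d eps i (Sv \<omega>)) * ennreal (l1 eps i (Dv i \<omega>))) \<partial>M)"
    by (rule nn_integral_sum[symmetric, OF mC])
  also have "\<dots> \<le> (\<integral>\<^sup>+\<omega>. ennreal (T \<omega>) \<partial>M)"
    by (rule nn_integral_mono_AE[OF lpw])
  finally show "ennreal ((1 - (1 - p*c)^n) * (1/(2*lam) - eps))
           \<le> (\<integral>\<^sup>+\<omega>. ennreal (deliv_time n g (\<lambda>i. P i \<omega>) d (\<lambda>e. meet_times (\<lambda>k. X e k \<omega>))) \<partial>M)"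
    by (simp add: T_def)
qed



lemma real_bounds:
  fixes lam eps q c r :: real
  assumes lam: "0 < lam" and eps: "0 < eps" and q0: "0 \<le> q" and q1: "q \<le> 1" and c0: "0 \<le> c" and cl: "c \<le> lam * eps"
    and up: "r \<le> q / lam + 1/(2*lam) + c/lam" and lo: "(1 - q) * (1/(2*lam) - eps) \<le> r"
  shows "\<bar>2 * lam * r - 1\<bar> \<le> 2 * q + 2 * lam * eps"
proof -
  have u: "2 * lam * r \<le> 2 * q + 1 + 2 * c"
  proof -
    have "2 * lam * r \<le> 2 * lam * (q / lam + 1/(2*lam) + c/lam)" using up lam by simp
    also have "\<dots> = 2 * q + 1 + 2 * c" using lam by (simp add: field_simps)
    finally show ?thesis .
  qed
  have l: "(1 - q) * (1 - 2 * lam * eps) \<le> 2 * lam * r"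
  proof -
    have "(1 - q) * (1 - 2 * lam * eps) = 2 * lam * ((1 - q) * (1/(2*lam) - eps))" using lam by (simp add: field_simps)
    also have "\<dots> \<le> 2 * lam * r" using lo lam by simp
    finally show ?thesis .
  qed
  have "(1 - q) * (1 - 2 * lam * eps) = 1 - q - 2 * lam * eps + q * (2 * lam * eps)" by (simp add: algebra_simps)
  moreover have "0 \<le> q * (2 * lam * eps)" using q0 lam eps by simp
  ultimately have l2: "1 - q - 2 * lam * eps \<le> 2 * lam * r" using l by linarith
  show ?thesis using u l2 cl q0 by (simp add: abs_le_iff)
qed


theorem proposition2:
  fixes M :: "nat \<Rightarrow> 'w measure"
    and Prof :: "nat \<Rightarrow> nat \<Rightarrow> 'w \<Rightarrow> real \<times> (real ^ 'k)"
    and X :: "nat \<Rightarrow> node set \<Rightarrow> nat \<Rightarrow> 'w \<Rightarrow> real"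
    and lam :: real and j1 :: 'k
  assumes lam_pos: "0 < lam"
    and prob: "\<And>n. prob_space (M n)"
    and prof_distr: "\<And>n i. i < n \<Longrightarrow> distr (M n) borel (Prof n i) = profile_distr"
    and prof_rv: "\<And>n i. i < n \<Longrightarrow> Prof n i \<in> borel_measurable (M n)"
    and meet_exp: "\<And>n e k. e \<in> node_pairs n \<Longrightarrow>
                     distributed (M n) lborel (X n e k) (exponential_density lam)"
    and indep: "\<And>n. prob_space.indep_sets (M n)
                  (case_sum (\<lambda>i. rv_events (M n) borel (Prof n i))
                            (\<lambda>(e, k). rv_events (M n) borel (X n e k)))
                  (Inl ` {..<n} \<union> Inr ` (node_pairs n \<times> UNIV))"
  shows "(\<lambda>n. 2 * lam * enn2real (\<integral>\<^sup>+ \<omega>. ennreal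
            (deliv_time n ((29/100) / real CARD('k)) (\<lambda>i. Prof n i \<omega>) (D_prof j1)
               (\<lambda>e. meet_times (\<lambda>k. X n e k \<omega>))) \<partial>M n)) \<longlonglongrightarrow> 1"
proof -
  define g where "g = (29/100) / real CARD('k)"
  define d :: "real \<times> (real ^ 'k)" where "d = D_prof j1"
  define p where "p = measure (profile_distr :: (real \<times> (real ^ 'k)) measure) {x. g \<le> x \<bullet> d}"
  define F where "F n = (\<integral>\<^sup>+ \<omega>. ennreal (deliv_time n g (\<lambda>i. Prof n i \<omega>) d
               (\<lambda>e. meet_times (\<lambda>k. X n e k \<omega>))) \<partial>M n)" for n
  have pps: "prob_space (profile_distr :: (real \<times> (real ^ 'k)) measure)" by (rule prof_pos(2))
  interpret PD: prob_space "profile_distr :: (real \<times> (real ^ 'k)) measure" by (rule pps)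
  have "0 < emeasure (profile_distr :: (real \<times> (real ^ 'k)) measure) {x. g \<le> x \<bullet> d}"
    unfolding g_def d_def by (rule prof_pos(1))
  then have pp: "0 < p" unfolding p_def using PD.emeasure_eq_measure by simp
  have p1: "p \<le> 1" unfolding p_def using PD.prob_le_1 by simp
  have bnd: "\<bar>2 * lam * enn2real (F n) - 1\<bar> \<le> 2 * (1 - p * (1 - exp (- eps * lam))) ^ n + 2 * lam * eps"
    if n: "1 \<le> n" and eps: "0 < eps" "eps \<le> 1" for n eps
  proof -
    define c where "c = 1 - exp (- eps * lam)"
    define q where "q = (1 - p * c) ^ n"
    have c0: "0 \<le> c" unfolding c_def using eps lam_pos by simp
    have c1: "c \<le> 1" unfolding c_def by simp
    have cl: "c \<le> lam * eps" unfolding c_def using exp_ge_add_one_self[of "- eps * lam"] by (simp add: algebra_simps)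
    have pc1: "p * c \<le> 1" using pp p1 c0 c1 by (simp add: mult_le_one)
    have q0: "0 \<le> q" unfolding q_def using pc1 by simp
    have q1: "q \<le> 1" unfolding q_def using pc1 pp c0 by (simp add: power_le_one)
    note PN = prob_space.per_n[OF prob lam_pos n eps prof_distr prof_rv meet_exp indep, of g d]
    have up: "F n \<le> ennreal (q / lam + 1/(2*lam) + c/lam)"
      using PN(1) unfolding F_def q_def c_def p_def by simp
    have lo: "ennreal ((1 - q) * (1/(2*lam) - eps)) \<le> F n"
      using PN(2) unfolding F_def q_def c_def p_def by simp
    have U0: "0 \<le> q / lam + 1/(2*lam) + c/lam" using q0 c0 lam_pos by simp
    have r_up: "enn2real (F n) \<le> q / lam + 1/(2*lam) + c/lam"
      using enn2real_mono[OF up] U0 by simp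
    have r_lo: "(1 - q) * (1/(2*lam) - eps) \<le> enn2real (F n)"
    proof (cases "0 \<le> (1 - q) * (1/(2*lam) - eps)")
      case True
      have "F n < top" using up by (simp add: order_le_less_trans)
      then have "enn2real (ennreal ((1 - q) * (1/(2*lam) - eps))) \<le> enn2real (F n)"
        by (rule enn2real_mono[OF lo])
      then show ?thesis using True by simp
    next
      case False
      then show ?thesis using enn2real_nonneg[of "F n"] by linarith
    qed
    from real_bounds[OF lam_pos eps(1) q0 q1 c0 cl r_up r_lo] show ?thesis
      unfolding q_def c_def .
  qed
  show ?thesis
    unfolding g_def[symmetric] d_def[symmetric] F_def[symmetric]
  proof (rule LIMSEQ_I)
    fix r :: real assume r: "0 < r"
    define eps where "eps = min 1 (r / (4 * lam))"
    have eps0: "0 < eps" "eps \<le> 1" unfolding eps_def using r lam_pos by auto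
    have le: "2 * lam * eps \<le> r / 2"
    proof -
      have "eps \<le> r / (4 * lam)" unfolding eps_def by simp
      then have "2 * lam * eps \<le> 2 * lam * (r / (4 * lam))" by (rule mult_left_mono) (use lam_pos in simp)
      also have "\<dots> = r / 2" using lam_pos by simp
      finally show ?thesis .
    qed
    define x where "x = 1 - p * (1 - exp (- eps * lam))"
    have cpos: "0 < 1 - exp (- eps * lam)" using eps0 lam_pos by simp
    have "p * (1 - exp (- eps * lam)) \<le> 1"
      by (rule mult_le_one) (use pp p1 cpos in auto)
    then have x0: "0 \<le> x" unfolding x_def by simp
    have x1: "x < 1" unfolding x_def using pp cpos by simp
    have "(\<lambda>n. x ^ n) \<longlonglongrightarrow> 0" by (rule LIMSEQ_power_zero) (use x0 x1 in simp)
    then have "\<forall>\<^sub>F n in sequentially. x ^ n < r / 8" using r by (intro order_tendstoD) auto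
    then obtain N where N: "\<And>n. N \<le> n \<Longrightarrow> x ^ n < r / 8" by (auto simp: eventually_sequentially)
    show "\<exists>no. \<forall>n\<ge>no. norm (2 * lam * enn2real (F n) - 1) < r"
    proof (intro exI allI impI)
      fix n assume n: "max 1 N \<le> n"
      have "\<bar>2 * lam * enn2real (F n) - 1\<bar> \<le> 2 * x ^ n + 2 * lam * eps"
        using bnd[of n eps] n eps0 unfolding x_def by simp
      also have "\<dots> < r" using N[of n] n le r by simp
      finally show "norm (2 * lam * enn2real (F n) - 1) < r" by simp
    qed
  qed
qed


end
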